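(* Let $q$ be a prime power and let $\mathcal{M}_q$ be the set of monic polynomials in $\mathbb{F}_q[T]$. For $f\in\mathcal{M}_q$ of degree $n\ge1$ let $P_{GL}(f)=|\{M\in\mathrm{GL}(n,\mathbb{F}_q):\det(T-M)=f\}|/|\mathrm{GL}(n,\mathbb{F}_q)|$, and set $P_{GL}(1)=1$. For $i\ge1$ define $\alpha_i^{GL}:\mathcal{M}_q\to\mathbb{R}$ by $\alpha_i^{GL}(g)=|g|^{-i}$ if $g(0)\ne0$ and $\alpha_i^{GL}(g)=0$ if $g(0)=0$. Then for every $f\in\mathcal{M}_q$, $$P_{GL}(f)=\lim_{k\to\infty}(\alpha_1^{GL}\ast\alpha_2^{GL}\ast\cdots\ast\alpha_k^{GL})(f).$$
   Context: $|g|=q^{\deg g}$ for $g\in\mathcal{M}_q$. The Dirichlet convolution of functions $\alpha,\beta:\mathcal{M}_q\to\mathbb{C}$ is $(\alpha\ast\beta)(f)=\sum_{g,h\in\mathcal{M}_q,\ gh=f}\alpha(g)\beta(h)$. *)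

theory Defs
  imports Complex_Main "Jordan_Normal_Form.Char_Poly"
begin

text \<open>F_q is modelled as a finite field type 'a; q = CARD('a).\<close>

definition monic_poly :: "'a::field poly \<Rightarrow> bool" where
  "monic_poly f \<longleftrightarrow> lead_coeff f = 1"

definition poly_norm :: "'a::{finite,field} poly \<Rightarrow> real" where
  "poly_norm g = real (card (UNIV :: 'a set)) ^ degree g"

definition dconv :: "('a::{finite,field} poly \<Rightarrow> real) \<Rightarrow> ('a poly \<Rightarrow> real) \<Rightarrow> 'a poly \<Rightarrow> real" where
  "dconv \<alpha> \<beta> f = (\<Sum>(g,h)\<in>{(g,h). monic_poly g \<and> monic_poly h \<and> g * h = f}. \<alpha> g * \<beta> h)"

definition alpha_GL :: "nat \<Rightarrow> 'a::{finite,field} poly \<Rightarrow> real" where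
  "alpha_GL i g = (if poly g 0 \<noteq> 0 then inverse (poly_norm g ^ i) else 0)"

fun conv_alpha_GL :: "nat \<Rightarrow> 'a::{finite,field} poly \<Rightarrow> real" where
  "conv_alpha_GL 0 = (\<lambda>f. if f = 1 then 1 else 0)"
| "conv_alpha_GL (Suc k) = dconv (conv_alpha_GL k) (alpha_GL (Suc k))"

text \<open>GL(n, F_q) as invertible n x n matrices; det(T - M) is char_poly M.\<close>
definition GL_mats :: "nat \<Rightarrow> 'a::{finite,field} mat set" where
  "GL_mats n = {M \<in> carrier_mat n n. det M \<noteq> 0}"

definition P_GL :: "'a::{finite,field} poly \<Rightarrow> real" where
  "P_GL f = (if f = 1 then 1 else
     real (card {M \<in> GL_mats (degree f). char_poly M = f}) / real (card (GL_mats (degree f :: nat) :: 'a mat set)))"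

end

theory Submission
  imports Defs
begin


definition indep :: "nat \<Rightarrow> 'a::field vec list \<Rightarrow> bool" where
  "indep n L \<longleftrightarrow> set L \<subseteq> carrier_vec n \<and>
     (\<forall>x\<in>carrier_vec (length L). mat_of_cols n L *\<^sub>v x = 0\<^sub>v n \<longrightarrow> x = 0\<^sub>v (length L))"

definition vspan :: "nat \<Rightarrow> 'a::field vec list \<Rightarrow> 'a vec set" where
  "vspan n L = (\<lambda>x. mat_of_cols n L *\<^sub>v x) ` carrier_vec (length L)"

lemma mat_of_cols_mult_vec:
  assumes "x \<in> carrier_vec (length L)"
  shows "mat_of_cols n L *\<^sub>v x = vec n (\<lambda>r. \<Sum>i<length L. L ! i $ r * x $ i)"
  using assms
  by (intro eq_vecI) (auto simp: mat_of_cols_def scalar_prod_def row_def atLeast0LessThan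
      intro!: sum.cong)

lemma vspan_carrier: "vspan n L \<subseteq> carrier_vec n"
  unfolding vspan_def using mult_mat_vec_carrier[OF mat_of_cols_carrier(1)] by auto

lemma card_carrier_vec: "card (carrier_vec n :: 'a::finite vec set) = card (UNIV :: 'a set) ^ n"
proof -
  have bij: "bij_betw (\<lambda>v. restrict (\<lambda>i. v $ i) {0..<n}) (carrier_vec n :: 'a vec set)
      (PiE {0..<n} (\<lambda>_. UNIV))"
  proof (rule bij_betw_byWitness[where f' = "\<lambda>f. vec n f"])
    show "\<forall>a\<in>carrier_vec n. vec n (restrict (($) a) {0..<n}) = a"
      by (auto intro!: eq_vecI)
    show "\<forall>a'\<in>PiE {0..<n} (\<lambda>_. UNIV). restrict (($) (vec n a')) {0..<n} = a'"
      by (auto simp: PiE_def extensional_def fun_eq_iff)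
  qed auto
  have "card (carrier_vec n :: 'a vec set) = card (PiE {0..<n} (\<lambda>_. (UNIV :: 'a set)))"
    using bij_betw_same_card[OF bij] .
  also have "\<dots> = card (UNIV :: 'a set) ^ n" by (simp add: card_PiE)
  finally show ?thesis .
qed

lemma finite_carrier_vec: "finite (carrier_vec n :: 'a::finite vec set)"
proof -
  have "card (UNIV :: 'a set) > 0" by (simp add: finite_UNIV_card_ge_0)
  then have "card (carrier_vec n :: 'a vec set) > 0" by (simp add: card_carrier_vec)
  then show ?thesis using card_gt_0_iff by blast
qed

lemma card_carrier_mat: "card (carrier_mat n m :: 'a::finite mat set) = card (UNIV :: 'a set) ^ (n * m)"
proof -
  have bij: "bij_betw (\<lambda>A. restrict (\<lambda>ij. A $$ ij) ({0..<n} \<times> {0..<m})) (carrier_mat n m :: 'a mat set)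
      (PiE ({0..<n} \<times> {0..<m}) (\<lambda>_. UNIV))"
  proof (rule bij_betw_byWitness[where f' = "\<lambda>f. mat n m f"])
    show "\<forall>a\<in>carrier_mat n m. mat n m (restrict (($$) a) ({0..<n} \<times> {0..<m})) = a"
      by (auto intro!: eq_matI)
    show "\<forall>a'\<in>PiE ({0..<n} \<times> {0..<m}) (\<lambda>_. UNIV). restrict (($$) (mat n m a')) ({0..<n} \<times> {0..<m}) = a'"
      by (auto simp: PiE_def extensional_def fun_eq_iff)
    show "(\<lambda>A. restrict (\<lambda>ij. A $$ ij) ({0..<n} \<times> {0..<m})) ` (carrier_mat n m :: 'a mat set) \<subseteq> PiE ({0..<n} \<times> {0..<m}) (\<lambda>_. UNIV)"
      by (intro image_subsetI, rule restrict_PiE_iff[THEN iffD2]) simp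
  qed auto
  have "card (carrier_mat n m :: 'a mat set) = card (PiE ({0..<n} \<times> {0..<m}) (\<lambda>_. (UNIV :: 'a set)))"
    using bij_betw_same_card[OF bij] .
  also have "\<dots> = card (UNIV :: 'a set) ^ (n * m)" by (simp add: card_PiE card_cartesian_product)
  finally show ?thesis .
qed

lemma finite_carrier_mat: "finite (carrier_mat n m :: 'a::finite mat set)"
proof -
  have "card (UNIV :: 'a set) > 0" by (simp add: finite_UNIV_card_ge_0)
  then have "card (carrier_mat n m :: 'a mat set) > 0" by (simp add: card_carrier_mat)
  then show ?thesis using card_gt_0_iff by blast
qed

lemma mat_of_cols_mult_vec_index:
  assumes "x \<in> carrier_vec (length L)" "r < n"
  shows "(mat_of_cols n L *\<^sub>v x) $ r = (\<Sum>i<length L. L ! i $ r * x $ i)"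
  using mat_of_cols_mult_vec[OF assms(1)] assms(2) by simp

lemma mat_of_cols_mult_vec_carrier[simp]: "mat_of_cols n L *\<^sub>v x \<in> carrier_vec n"
  by (metis carrier_vec_dim_vec dim_mult_mat_vec mat_of_cols_carrier(2))

lemma card_UNIV_ge2: "card (UNIV :: 'a::{finite,field} set) \<ge> 2"
proof -
  have "{0, 1} \<subseteq> (UNIV :: 'a set)" by simp
  then have "card {0 :: 'a, 1} \<le> card (UNIV :: 'a set)" by (intro card_mono) auto
  then show ?thesis by simp
qed

lemma indep_inj:
  assumes "indep n L"
  shows "inj_on (\<lambda>x. mat_of_cols n L *\<^sub>v x) (carrier_vec (length L))"
proof (rule inj_onI)
  fix x y assume x: "x \<in> carrier_vec (length L)" and y: "y \<in> carrier_vec (length L)"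
    and eq: "mat_of_cols n L *\<^sub>v x = mat_of_cols n L *\<^sub>v y"
  have "mat_of_cols n L *\<^sub>v (x - y) = mat_of_cols n L *\<^sub>v x - mat_of_cols n L *\<^sub>v y"
    using x y by (intro mult_minus_distrib_mat_vec) auto
  also have "\<dots> = 0\<^sub>v n" using eq by (intro eq_vecI) auto
  finally have "x - y = 0\<^sub>v (length L)" using assms x y unfolding indep_def by auto
  then show "x = y" using x y by (intro eq_vecI) (auto simp: vec_eq_iff)
qed

lemma card_vspan:
  assumes "indep n L"
  shows "card (vspan (n::nat) L :: 'a::{finite,field} vec set) = card (UNIV :: 'a set) ^ length L"
  unfolding vspan_def using card_image[OF indep_inj[OF assms]] card_carrier_vec by simp

lemma indep_length:
  assumes "indep n (L :: 'a::{finite,field} vec list)"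
  shows "length L \<le> n"
proof -
  have "card (vspan n L) \<le> card (carrier_vec n :: 'a vec set)"
    by (intro card_mono finite_carrier_vec vspan_carrier)
  then have "card (UNIV :: 'a set) ^ length L \<le> card (UNIV :: 'a set) ^ n"
    using card_vspan[OF assms] card_carrier_vec by metis
  then show ?thesis using card_UNIV_ge2[where 'a='a] by (simp add: power_le_imp_le_exp)
qed

lemma indep_prefix:
  assumes "indep n (L @ W)"
  shows "indep n L"
  unfolding indep_def
proof (intro conjI ballI impI)
  show "set L \<subseteq> carrier_vec n" using assms unfolding indep_def by auto
  fix x :: "'a vec" assume x: "x \<in> carrier_vec (length L)" and z: "mat_of_cols n L *\<^sub>v x = 0\<^sub>v n"
  define x' where "x' = vec (length (L @ W)) (\<lambda>i. if i < length L then x $ i else 0)"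
  have x': "x' \<in> carrier_vec (length (L @ W))" unfolding x'_def by simp
  have "mat_of_cols n (L @ W) *\<^sub>v x' = 0\<^sub>v n"
  proof (intro eq_vecI)
    fix r assume r: "r < dim_vec (0\<^sub>v n :: 'a vec)"
    then have r: "r < n" by simp
    have "(mat_of_cols n (L @ W) *\<^sub>v x') $ r = (\<Sum>i<length (L @ W). (L @ W) ! i $ r * x' $ i)"
      by (rule mat_of_cols_mult_vec_index[OF x' r])
    also have "\<dots> = (\<Sum>i<length L. L ! i $ r * x $ i)"
    proof -
      have "(\<Sum>i<length (L @ W). (L @ W) ! i $ r * x' $ i) = (\<Sum>i\<in>{..<length L}. (L @ W) ! i $ r * x' $ i)"
        by (rule sum.mono_neutral_right) (auto simp: x'_def)
      also have "\<dots> = (\<Sum>i<length L. L ! i $ r * x $ i)"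
        by (rule sum.cong) (auto simp: x'_def nth_append)
      finally show ?thesis .
    qed
    also have "\<dots> = (mat_of_cols n L *\<^sub>v x) $ r" using mat_of_cols_mult_vec_index[OF x r] by simp
    also have "\<dots> = 0" using z r by simp
    finally show "(mat_of_cols n (L @ W) *\<^sub>v x') $ r = 0\<^sub>v n $ r" using r by simp
  qed simp
  then have "x' = 0\<^sub>v (length (L @ W))" using assms x' unfolding indep_def by blast
  then have "x' $ i = 0" if "i < length L" for i using that by simp
  then have "x $ i = 0" if "i < length L" for i using that by (simp add: x'_def)
  then show "x = 0\<^sub>v (length L)" using x by (intro eq_vecI) auto
qed

lemma indep_snoc_iff:
  assumes L: "indep n L" and w: "w \<in> carrier_vec n"
  shows "indep n (L @ [w]) \<longleftrightarrow> w \<notin> vspan n L"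
proof
  assume ind: "indep n (L @ [w])"
  show "w \<notin> vspan n L"
  proof
    assume "w \<in> vspan n L"
    then obtain y where y: "y \<in> carrier_vec (length L)" and wy: "w = mat_of_cols n L *\<^sub>v y"
      unfolding vspan_def by auto
    define x where "x = vec (Suc (length L)) (\<lambda>i. if i < length L then y $ i else - 1)"
    have x: "x \<in> carrier_vec (length (L @ [w]))" unfolding x_def by simp
    have "mat_of_cols n (L @ [w]) *\<^sub>v x = 0\<^sub>v n"
    proof (intro eq_vecI)
      fix r assume "r < dim_vec (0\<^sub>v n :: 'a vec)"
      then have r: "r < n" by simp
      have "(mat_of_cols n (L @ [w]) *\<^sub>v x) $ r = (\<Sum>i<Suc (length L). (L @ [w]) ! i $ r * x $ i)"
        using mat_of_cols_mult_vec_index[OF x r] by simp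
      also have "\<dots> = (\<Sum>i<length L. L ! i $ r * y $ i) - w $ r"
        by (simp add: x_def nth_append)
      also have "\<dots> = 0" using wy mat_of_cols_mult_vec_index[OF y r] by simp
      finally show "(mat_of_cols n (L @ [w]) *\<^sub>v x) $ r = 0\<^sub>v n $ r" using r by simp
    qed simp
    then have "x = 0\<^sub>v (length (L @ [w]))" using ind x unfolding indep_def by blast
    then have "x $ length L = 0" by simp
    then show False by (simp add: x_def)
  qed
next
  assume nw: "w \<notin> vspan n L"
  show "indep n (L @ [w])"
    unfolding indep_def
  proof (intro conjI ballI impI)
    show "set (L @ [w]) \<subseteq> carrier_vec n" using L w unfolding indep_def by auto
    fix x :: "'a vec" assume x: "x \<in> carrier_vec (length (L @ [w]))"
      and z: "mat_of_cols n (L @ [w]) *\<^sub>v x = 0\<^sub>v n"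
    define y where "y = vec (length L) (\<lambda>i. x $ i)"
    define c where "c = x $ length L"
    have y: "y \<in> carrier_vec (length L)" unfolding y_def by simp
    have eq: "(\<Sum>i<length L. L ! i $ r * y $ i) + w $ r * c = 0" if r: "r < n" for r
    proof -
      have "0 = (mat_of_cols n (L @ [w]) *\<^sub>v x) $ r" using z r by simp
      also have "\<dots> = (\<Sum>i<Suc (length L). (L @ [w]) ! i $ r * x $ i)"
        using mat_of_cols_mult_vec_index[OF x r] by simp
      also have "\<dots> = (\<Sum>i<length L. L ! i $ r * y $ i) + w $ r * c"
        by (simp add: y_def c_def nth_append)
      finally show ?thesis by simp
    qed
    have c0: "c = 0"
    proof (rule ccontr)
      assume c: "c \<noteq> 0"
      define y' where "y' = vec (length L) (\<lambda>i. - y $ i / c)"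
      have y': "y' \<in> carrier_vec (length L)" unfolding y'_def by simp
      have "w = mat_of_cols n L *\<^sub>v y'"
      proof (intro eq_vecI)
        fix r assume "r < dim_vec (mat_of_cols n L *\<^sub>v y')"
        then have r: "r < n" by simp
        have "(mat_of_cols n L *\<^sub>v y') $ r = (\<Sum>i<length L. L ! i $ r * y' $ i)"
          by (rule mat_of_cols_mult_vec_index[OF y' r])
        also have "\<dots> = - (\<Sum>i<length L. L ! i $ r * y $ i) / c"
          by (simp add: y'_def sum_divide_distrib sum_negf)
        also have "\<dots> = w $ r * c / c" using minus_unique[OF eq[OF r]] by simp
        also have "\<dots> = w $ r" using c by simp
        finally show "w $ r = (mat_of_cols n L *\<^sub>v y') $ r" by simp
      qed (use w in simp)
      then have "w \<in> vspan n L" using y' unfolding vspan_def by blast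
      then show False using nw by simp
    qed
    have "mat_of_cols n L *\<^sub>v y = 0\<^sub>v n"
    proof (intro eq_vecI)
      fix r assume "r < dim_vec (0\<^sub>v n :: 'a vec)"
      then have r: "r < n" by simp
      show "(mat_of_cols n L *\<^sub>v y) $ r = 0\<^sub>v n $ r"
        using eq[OF r] c0 mat_of_cols_mult_vec_index[OF y r] r by simp
    qed simp
    then have "y = 0\<^sub>v (length L)" using L y unfolding indep_def by blast
    then show "x = 0\<^sub>v (length (L @ [w]))" using x c0
      by (intro eq_vecI) (auto simp: y_def c_def vec_eq_iff less_Suc_eq)
  qed
qed

definition ext_set :: "nat \<Rightarrow> 'a::field vec list \<Rightarrow> nat \<Rightarrow> 'a vec list set" where
  "ext_set n L m = {W. length W = m \<and> set W \<subseteq> carrier_vec n \<and> indep n (L @ W)}"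

lemma finite_ext_set: "finite (ext_set n (L :: 'a::{finite,field} vec list) m)"
proof -
  have "ext_set n L m \<subseteq> {xs. set xs \<subseteq> carrier_vec n \<and> length xs = m}"
    unfolding ext_set_def by auto
  moreover have "finite {xs. set xs \<subseteq> (carrier_vec n :: 'a vec set) \<and> length xs = m}"
    by (rule finite_lists_length_eq[OF finite_carrier_vec])
  ultimately show ?thesis by (rule finite_subset)
qed

lemma card_ext_set:
  assumes "indep n (L :: 'a::{finite,field} vec list)"
  shows "card (ext_set n L m) =
    (\<Prod>j\<in>{length L..<length L + m}. card (UNIV :: 'a set) ^ n - card (UNIV :: 'a set) ^ j)"
  using assms
proof (induction m arbitrary: L)
  case 0
  then have "ext_set n L 0 = {[]}" unfolding ext_set_def by auto
  then show ?case by simp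
next
  case (Suc m)
  let ?q = "card (UNIV :: 'a set)"
  let ?A = "carrier_vec n - vspan n L"
  have eq: "ext_set n L (Suc m) = (\<lambda>(w, W). w # W) ` (SIGMA w:?A. ext_set n (L @ [w]) m)"
  proof (intro equalityI subsetI)
    fix X assume X: "X \<in> ext_set n L (Suc m)"
    then obtain w W where XW: "X = w # W" unfolding ext_set_def by (cases X) auto
    have w: "w \<in> carrier_vec n" and W: "set W \<subseteq> carrier_vec n" and lW: "length W = m"
      using X XW unfolding ext_set_def by auto
    have ind: "indep n ((L @ [w]) @ W)" using X XW unfolding ext_set_def by auto
    then have "indep n (L @ [w])" by (rule indep_prefix)
    then have "w \<notin> vspan n L" using indep_snoc_iff[OF Suc.prems w] by simp
    then show "X \<in> (\<lambda>(w, W). w # W) ` (SIGMA w:?A. ext_set n (L @ [w]) m)"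
      using w W lW ind XW unfolding ext_set_def by auto
  next
    fix X assume "X \<in> (\<lambda>(w, W). w # W) ` (SIGMA w:?A. ext_set n (L @ [w]) m)"
    then obtain w W where XW: "X = w # W" and w: "w \<in> ?A" and W: "W \<in> ext_set n (L @ [w]) m"
      by auto
    then show "X \<in> ext_set n L (Suc m)" unfolding ext_set_def by auto
  qed
  have inj: "inj_on (\<lambda>(w, W). w # W) (SIGMA w:?A. ext_set n (L @ [w]) m)"
    by (auto simp: inj_on_def)
  have ind': "indep n (L @ [w])" if "w \<in> ?A" for w
    using indep_snoc_iff[OF Suc.prems] that by auto
  have "card (ext_set n L (Suc m)) = card (SIGMA w:?A. ext_set n (L @ [w]) m)"
    unfolding eq by (rule card_image[OF inj])
  also have "\<dots> = (\<Sum>w\<in>?A. card (ext_set n (L @ [w]) m))"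
    by (rule card_SigmaI) (auto intro: finite_ext_set finite_Diff finite_carrier_vec)
  also have "\<dots> = (\<Sum>w\<in>?A. (\<Prod>j\<in>{Suc (length L)..<Suc (length L) + m}. ?q ^ n - ?q ^ j))"
    using Suc.IH[OF ind'] by (intro sum.cong) auto
  also have "\<dots> = card ?A * (\<Prod>j\<in>{Suc (length L)..<Suc (length L) + m}. ?q ^ n - ?q ^ j)"
    by simp
  also have "card ?A = ?q ^ n - ?q ^ length L"
    using card_Diff_subset[OF _ vspan_carrier, of n L] finite_subset[OF vspan_carrier finite_carrier_vec]
      card_vspan[OF Suc.prems] card_carrier_vec by metis
  also have "(?q ^ n - ?q ^ length L) * (\<Prod>j\<in>{Suc (length L)..<Suc (length L) + m}. ?q ^ n - ?q ^ j)
     = (\<Prod>j\<in>{length L..<length L + Suc m}. ?q ^ n - ?q ^ j)"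
    by (subst prod.atLeast_Suc_lessThan) auto
  finally show ?case .
qed

lemma det_ne_0_iff_indep:
  assumes P: "(P :: 'a::field mat) \<in> carrier_mat n n"
  shows "det P \<noteq> 0 \<longleftrightarrow> indep n (cols P)"
proof -
  have mc: "mat_of_cols n (cols P) = P" using P mat_of_cols_cols[of P] by simp
  have sc: "set (cols P) \<subseteq> carrier_vec n" using P by (auto simp: cols_def)
  show ?thesis
    unfolding det_0_iff_vec_prod_zero_field[OF P, THEN Not_eq_iff[THEN iffD2]] indep_def mc
    using P sc by auto
qed

lemma card_GL_prefix:
  assumes L: "indep n (L :: 'a::{finite,field} vec list)"
  shows "card {P \<in> carrier_mat n n. det P \<noteq> 0 \<and> (\<forall>i<length L. col P i = L ! i)} =
    (\<Prod>j\<in>{length L..<n}. card (UNIV :: 'a set) ^ n - card (UNIV :: 'a set) ^ j)"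
proof -
  let ?d = "length L"
  have dn: "?d \<le> n" by (rule indep_length[OF L])
  have Lc: "set L \<subseteq> carrier_vec n" using L unfolding indep_def by auto
  have bij: "bij_betw (\<lambda>P. drop ?d (cols P)) {P \<in> carrier_mat n n. det P \<noteq> 0 \<and> (\<forall>i<?d. col P i = L ! i)}
     (ext_set n L (n - ?d))"
  proof (rule bij_betw_byWitness[where f' = "\<lambda>W. mat_of_cols n (L @ W)"])
    have split: "cols P = L @ drop ?d (cols P)" if "P \<in> carrier_mat n n" "\<forall>i<?d. col P i = L ! i" for P
      using that dn by (intro nth_equalityI) (auto simp: nth_append)
    show "\<forall>P\<in>{P \<in> carrier_mat n n. det P \<noteq> 0 \<and> (\<forall>i<?d. col P i = L ! i)}. mat_of_cols n (L @ drop ?d (cols P)) = P"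
    proof
      fix P assume "P \<in> {P \<in> carrier_mat n n. det P \<noteq> 0 \<and> (\<forall>i<?d. col P i = L ! i)}"
      then have P: "P \<in> carrier_mat n n" "\<forall>i<?d. col P i = L ! i" by auto
      have "mat_of_cols n (L @ drop ?d (cols P)) = mat_of_cols n (cols P)" using split[OF P] by simp
      also have "\<dots> = P" using P mat_of_cols_cols[of P] by simp
      finally show "mat_of_cols n (L @ drop ?d (cols P)) = P" .
    qed
    show "\<forall>W\<in>ext_set n L (n - ?d). drop ?d (cols (mat_of_cols n (L @ W))) = W"
      using Lc by (auto simp: ext_set_def)
    show "(\<lambda>P. drop ?d (cols P)) ` {P \<in> carrier_mat n n. det P \<noteq> 0 \<and> (\<forall>i<?d. col P i = L ! i)}
       \<subseteq> ext_set n L (n - ?d)"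
    proof
      fix W assume "W \<in> (\<lambda>P. drop ?d (cols P)) ` {P \<in> carrier_mat n n. det P \<noteq> 0 \<and> (\<forall>i<?d. col P i = L ! i)}"
      then obtain P where W: "W = drop ?d (cols P)" and P: "P \<in> carrier_mat n n" "det P \<noteq> 0"
        "\<forall>i<?d. col P i = L ! i" by auto
      have ind: "indep n (cols P)" using det_ne_0_iff_indep[OF P(1)] P(2) by simp
      have sc: "set (cols P) \<subseteq> carrier_vec n" using P by (auto simp: cols_def)
      show "W \<in> ext_set n L (n - ?d)"
        unfolding ext_set_def using ind sc split[OF P(1) P(3)] P(1) W
        by (auto dest: in_set_dropD)
    qed
    show "(\<lambda>W. mat_of_cols n (L @ W)) ` ext_set n L (n - ?d)
       \<subseteq> {P \<in> carrier_mat n n. det P \<noteq> 0 \<and> (\<forall>i<?d. col P i = L ! i)}"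
    proof
      fix P assume "P \<in> (\<lambda>W. mat_of_cols n (L @ W)) ` ext_set n L (n - ?d)"
      then obtain W where P: "P = mat_of_cols n (L @ W)" and W: "W \<in> ext_set n L (n - ?d)" by auto
      have lW: "length W = n - ?d" and sW: "set W \<subseteq> carrier_vec n" and ind: "indep n (L @ W)"
        using W unfolding ext_set_def by auto
      have Pc: "P \<in> carrier_mat n n" using P lW dn by auto
      have cP: "cols P = L @ W" using P Lc sW by simp
      have "det P \<noteq> 0" using det_ne_0_iff_indep[OF Pc] cP ind by simp
      moreover have "col P i = L ! i" if "i < ?d" for i
      proof -
        have "col P i = cols P ! i" using Pc that dn by simp
        then show ?thesis using cP that by (simp add: nth_append)
      qed
      ultimately show "P \<in> {P \<in> carrier_mat n n. det P \<noteq> 0 \<and> (\<forall>i<?d. col P i = L ! i)}"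
        using Pc by auto
    qed
  qed
  have "card {P \<in> carrier_mat n n. det P \<noteq> 0 \<and> (\<forall>i<?d. col P i = L ! i)} = card (ext_set n L (n - ?d))"
    by (rule bij_betw_same_card[OF bij])
  also have "\<dots> = (\<Prod>j\<in>{?d..<?d + (n - ?d)}. card (UNIV :: 'a set) ^ n - card (UNIV :: 'a set) ^ j)"
    by (rule card_ext_set[OF L])
  also have "?d + (n - ?d) = n" using dn by simp
  finally show ?thesis .
qed


definition comp_mat :: "nat \<Rightarrow> 'a::comm_ring_1 poly \<Rightarrow> 'a mat" where
  "comp_mat d k = mat d d (\<lambda>(i,j). if j = d - 1 then - coeff k i else if i = j + 1 then 1 else 0)"

lemma comp_mat_carrier[simp]: "comp_mat d k \<in> carrier_mat d d"
  unfolding comp_mat_def by simp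

lemma comp_mat_index: "i < d \<Longrightarrow> j < d \<Longrightarrow>
   comp_mat d k $$ (i,j) = (if j = d - 1 then - coeff k i else if i = j + 1 then 1 else 0)"
  unfolding comp_mat_def by simp

lemma char_poly_matrix_index:
  assumes "A \<in> carrier_mat n n" "i < n" "j < n"
  shows "char_poly_matrix A $$ (i,j) = (if i = j then [:0,1:] else 0) + [:- A $$ (i,j):]"
  using assms unfolding char_poly_matrix_def by simp

lemma dim_char_poly_matrix[simp]:
  "dim_row (char_poly_matrix A) = dim_row A" "dim_col (char_poly_matrix A) = dim_col A"
  unfolding char_poly_matrix_def by simp_all

lemma dim_comp_mat[simp]: "dim_row (comp_mat d k) = d" "dim_col (comp_mat d k) = d"
  unfolding comp_mat_def by simp_all

lemma char_poly_comp:
  assumes "degree k = d" "lead_coeff k = (1 :: 'a :: comm_ring_1)"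
  shows "char_poly (comp_mat d k) = k"
  using assms
proof (induction d arbitrary: k)
  case 0
  have "k = [:coeff k 0:]" using 0 by (metis degree_0_id)
  then have "k = 1" using 0 by (metis one_pCons)
  then show ?case unfolding char_poly_def
    by (subst det_dim_zero) (auto intro: char_poly_matrix_closed[OF comp_mat_carrier])
next
  case (Suc d)
  obtain a p where k: "k = pCons a p" by (cases k)
  have p0: "p \<noteq> 0" using Suc.prems k by auto
  have dp: "degree p = d" using Suc.prems k p0 by simp
  have lp: "lead_coeff p = 1" using Suc.prems k p0 dp by simp
  have ck: "coeff k (Suc i) = coeff p i" "coeff k 0 = a" for i using k by simp_all
  let ?C = "comp_mat (Suc d) k"
  let ?M = "char_poly_matrix ?C"
  have C: "?C \<in> carrier_mat (Suc d) (Suc d)" by simp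
  have M: "?M \<in> carrier_mat (Suc d) (Suc d)" by simp
  have Mi: "?M $$ (i,j) = (if i = j then [:0,1:] else 0) +
      [:- (if j = d then - coeff k i else if i = j + 1 then 1 else 0):]" if "i < Suc d" "j < Suc d" for i j
    using char_poly_matrix_index[OF C that] comp_mat_index[OF that, of k] by simp
  have "char_poly ?C = det ?M" unfolding char_poly_def ..
  also have "\<dots> = (\<Sum>j<Suc d. ?M $$ (0,j) * cofactor ?M 0 j)"
    by (rule laplace_expansion_row[OF M]) simp
  also have "\<dots> = k"
  proof (cases "d = 0")
    case True
    have "(\<Sum>j<Suc d. ?M $$ (0,j) * cofactor ?M 0 j) = ?M $$ (0,0) * cofactor ?M 0 0"
      using True by simp
    also have "cofactor ?M 0 0 = 1" unfolding cofactor_def using True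
      by (subst det_dim_zero) (auto simp: mat_delete_def char_poly_matrix_def)
    also have "?M $$ (0,0) = [:a, 1:]" using Mi[of 0 0] True ck by simp
    also have "p = 1" using dp lp True by (metis degree_0_id one_pCons)
    then have "[:a, 1:] = k" using k by simp
    finally show ?thesis by simp
  next
    case False
    have z: "?M $$ (0,j) * cofactor ?M 0 j = 0" if "j \<in> {..<Suc d} - {0, d}" for j
      using that Mi[of 0 j] by auto
    have "(\<Sum>j<Suc d. ?M $$ (0,j) * cofactor ?M 0 j) = (\<Sum>j\<in>{0,d}. ?M $$ (0,j) * cofactor ?M 0 j)"
      by (rule sum.mono_neutral_right) (use z in auto)
    also have "\<dots> = ?M $$ (0,0) * cofactor ?M 0 0 + ?M $$ (0,d) * cofactor ?M 0 d"
      using False by simp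
    also have "?M $$ (0,0) = [:0,1:]" using Mi[of 0 0] False by simp
    also have "?M $$ (0,d) = [:a:]" using Mi[of 0 d] False ck by simp
    also have "cofactor ?M 0 0 = p"
    proof -
      have "mat_delete ?M 0 0 = char_poly_matrix (comp_mat d p)"
      proof (rule eq_matI)
        fix i j assume "i < dim_row (char_poly_matrix (comp_mat d p))" "j < dim_col (char_poly_matrix (comp_mat d p))"
        then have ij: "i < d" "j < d" by simp_all
        have "mat_delete ?M 0 0 $$ (i,j) = ?M $$ (Suc i, Suc j)"
          using ij unfolding mat_delete_def by simp
        also have "\<dots> = (if i = j then [:0,1:] else 0) +
            [:- (if j = d - 1 then - coeff p i else if i = j + 1 then 1 else 0):]"
          using Mi[of "Suc i" "Suc j"] ij ck False by auto
        also have "\<dots> = char_poly_matrix (comp_mat d p) $$ (i,j)"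
          using char_poly_matrix_index[OF comp_mat_carrier ij, of p] comp_mat_index[OF ij, of p] by simp
        finally show "mat_delete ?M 0 0 $$ (i,j) = char_poly_matrix (comp_mat d p) $$ (i,j)" .
      qed (auto simp: mat_delete_def)
      then show ?thesis unfolding cofactor_def using Suc.IH[OF dp lp] by (simp add: char_poly_def)
    qed
    also have "cofactor ?M 0 d = 1"
    proof -
      let ?D = "mat_delete ?M 0 d"
      have D: "?D \<in> carrier_mat d d" unfolding mat_delete_def by simp
      have Di: "?D $$ (i,j) = (if j = Suc i then [:0,1:] else 0) + (if i = j then [:-1:] else 0)"
        if "i < d" "j < d" for i j
      proof -
        have "?D $$ (i,j) = ?M $$ (Suc i, j)" using that unfolding mat_delete_def by simp
        also have "\<dots> = (if j = Suc i then [:0,1:] else 0) + (if i = j then [:-1:] else 0)"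
          using Mi[of "Suc i" j] that by auto
        finally show ?thesis .
      qed
      have ut: "upper_triangular ?D" unfolding upper_triangular_def using D Di by auto
      have "diag_mat ?D = replicate d [:-1:]"
        using D Di by (intro nth_equalityI) (auto simp: diag_mat_def)
      then have "det ?D = [:-1:] ^ d" using det_upper_triangular[OF ut D] by simp
      also have "[:-1:] = (-1 :: 'a poly)" by (simp add: one_pCons)
      finally have "det ?D = (-1) ^ d" .
      then show ?thesis unfolding cofactor_def
        by (simp flip: power_add add: mult_2[symmetric])
    qed
    finally show ?thesis using k by (simp add: mult_pCons_left)
  qed
  finally show ?case .
qed


definition kv :: "'a::field mat \<Rightarrow> 'a vec \<Rightarrow> nat \<Rightarrow> 'a vec" where
  "kv M v i = ((\<lambda>u. M *\<^sub>v u) ^^ i) v"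

definition krylov :: "'a::field mat \<Rightarrow> 'a vec \<Rightarrow> nat \<Rightarrow> 'a vec list" where
  "krylov M v j = map (kv M v) [0..<j]"

definition good :: "nat \<Rightarrow> 'a::field mat \<Rightarrow> 'a vec \<Rightarrow> nat \<Rightarrow> bool" where
  "good n M v d \<longleftrightarrow> indep n (krylov M v d) \<and> kv M v d \<in> vspan n (krylov M v d)"

lemma kv_0[simp]: "kv M v 0 = v" unfolding kv_def by simp
lemma kv_Suc: "kv M v (Suc i) = M *\<^sub>v kv M v i" unfolding kv_def by simp

lemma kv_carrier: "M \<in> carrier_mat n n \<Longrightarrow> v \<in> carrier_vec n \<Longrightarrow> kv M v i \<in> carrier_vec n"
  by (induction i) (auto simp: kv_Suc)

lemma length_krylov[simp]: "length (krylov M v j) = j" unfolding krylov_def by simp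

lemma nth_krylov[simp]: "i < j \<Longrightarrow> krylov M v j ! i = kv M v i" unfolding krylov_def by simp

lemma krylov_Suc: "krylov M v (Suc j) = krylov M v j @ [kv M v j]" unfolding krylov_def by simp

lemma krylov_add: "krylov M v (a + b) = krylov M v a @ map (kv M v) [a..<a+b]"
  unfolding krylov_def upt_add_eq_append[of 0 a b, OF le0] by simp

lemma krylov_carrier: "M \<in> carrier_mat n n \<Longrightarrow> v \<in> carrier_vec n \<Longrightarrow> set (krylov M v j) \<subseteq> carrier_vec n"
  unfolding krylov_def using kv_carrier by auto

lemma indep_Nil: "indep n []"
  unfolding indep_def by (auto intro!: eq_vecI)

lemma indep_krylov:
  assumes M: "M \<in> carrier_mat n n" and v: "v \<in> carrier_vec n"
    and "\<forall>j<d. kv M v j \<notin> vspan n (krylov M v j)"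
  shows "indep n (krylov M v d)"
  using assms(3)
proof (induction d)
  case 0 then show ?case by (simp add: krylov_def indep_Nil)
next
  case (Suc d)
  then have ind: "indep n (krylov M v d)" by simp
  show ?case unfolding krylov_Suc
    using indep_snoc_iff[OF ind kv_carrier[OF M v]] Suc.prems by simp
qed

lemma good_exists:
  assumes M: "M \<in> carrier_mat n n" and v: "v \<in> carrier_vec n"
  shows "\<exists>d\<le>n. good n (M :: 'a::{finite,field} mat) v d"
proof (cases "\<exists>d\<le>n. kv M v d \<in> vspan n (krylov M v d)")
  case True
  define d where "d = (LEAST d. kv M v d \<in> vspan n (krylov M v d))"
  have d: "kv M v d \<in> vspan n (krylov M v d)" unfolding d_def
    using True by (metis (mono_tags, lifting) LeastI)
  have dn: "d \<le> n" unfolding d_def using True by (meson Least_le order_trans)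
  have "\<forall>j<d. kv M v j \<notin> vspan n (krylov M v j)" unfolding d_def using not_less_Least by blast
  then have "indep n (krylov M v d)" by (rule indep_krylov[OF M v])
  then show ?thesis using d dn unfolding good_def by blast
next
  case False
  then have "\<forall>j<Suc n. kv M v j \<notin> vspan n (krylov M v j)" by auto
  then have "indep n (krylov M v (Suc n))" by (rule indep_krylov[OF M v])
  then have "Suc n \<le> n" using indep_length by fastforce
  then show ?thesis by simp
qed

lemma good_le:
  assumes "good n (M :: 'a::{finite,field} mat) v d"
  shows "d \<le> n"
  using assms indep_length unfolding good_def by fastforce

lemma good_unique:
  assumes M: "M \<in> carrier_mat n n" and v: "v \<in> carrier_vec n"
    and g1: "good n M v d1" and g2: "good n M v d2"
  shows "d1 = d2"
proof -
  have *: False if a: "good n M v a" and b: "good n M v b" and ab: "a < b" for a b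
  proof -
    have "krylov M v b = krylov M v (Suc a + (b - Suc a))" using ab by simp
    also have "\<dots> = (krylov M v a @ [kv M v a]) @ map (kv M v) [Suc a..<Suc a + (b - Suc a)]"
      unfolding krylov_add krylov_Suc ..
    finally have "indep n ((krylov M v a @ [kv M v a]) @ map (kv M v) [Suc a..<Suc a + (b - Suc a)])"
      using b unfolding good_def by simp
    then have i1: "indep n (krylov M v a @ [kv M v a])" by (rule indep_prefix)
    then have i0: "indep n (krylov M v a)" by (rule indep_prefix)
    have "kv M v a \<notin> vspan n (krylov M v a)"
      using indep_snoc_iff[OF i0 kv_carrier[OF M v]] i1 by simp
    then show False using a unfolding good_def by simp
  qed
  show ?thesis using *[OF g1 g2] *[OF g2 g1] by (metis linorder_neqE_nat)
qed

lemma mult_unit_vec: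
  fixes A :: "'a::semiring_1 mat"
  assumes "A \<in> carrier_mat n m" "j < m"
  shows "A *\<^sub>v unit_vec m j = col A j"
proof (intro eq_vecI)
  fix i assume "i < dim_vec (col A j)"
  then have i: "i < n" using assms by simp
  have "(A *\<^sub>v unit_vec m j) $ i = (\<Sum>ia = 0..<m. A $$ (i, ia) * (if ia = j then 1 else 0))"
    using assms i by (simp add: scalar_prod_def unit_vec_def)
  also have "\<dots> = (\<Sum>ia = 0..<m. if ia = j then A $$ (i, ia) else 0)" by (rule sum.cong) auto
  also have "\<dots> = col A j $ i" using assms i by simp
  finally show "(A *\<^sub>v unit_vec m j) $ i = col A j $ i" .
qed (use assms in simp)

lemma char_poly_four_block_zero:
  assumes A1: "(A1 :: 'a :: idom mat) \<in> carrier_mat n1 n1"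
  and A2: "A2 \<in> carrier_mat n1 n2" and A4: "A4 \<in> carrier_mat n2 n2"
  shows "char_poly (four_block_mat A1 A2 (0\<^sub>m n2 n1) A4) = char_poly A1 * char_poly A4"
proof -
  let ?cm = "\<lambda> A. [:0, 1:] \<cdot>\<^sub>m 1\<^sub>m (dim_row A) + map_mat (\<lambda>a. [:- a:]) A"
  let ?B2 = "map_mat (\<lambda>a. [:- a:]) A2"
  have "char_poly (four_block_mat A1 A2 (0\<^sub>m n2 n1) A4) = det (?cm (four_block_mat A1 A2 (0\<^sub>m n2 n1) A4))"
    unfolding char_poly_defs using A1 A4 by simp
  also have "?cm (four_block_mat A1 A2 (0\<^sub>m n2 n1) A4) = four_block_mat (?cm A1) ?B2 (0\<^sub>m n2 n1) (?cm A4)"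
    by (rule eq_matI, insert A1 A2 A4, auto simp: one_poly_def)
  also have "det \<dots> = det (?cm A1) * det (?cm A4)"
    by (rule det_four_block_mat_lower_left_zero[OF _ _ refl], insert A1 A2 A4, auto)
  also have "\<dots> = char_poly A1 * char_poly A4" unfolding char_poly_defs ..
  finally show ?thesis .
qed

definition inv_mat :: "'a::field mat \<Rightarrow> 'a mat" where
  "inv_mat P = inverse (det P) \<cdot>\<^sub>m adj_mat P"

lemma inv_mat:
  assumes P: "P \<in> carrier_mat n n" and d: "det P \<noteq> 0"
  shows "inv_mat P \<in> carrier_mat n n" "P * inv_mat P = 1\<^sub>m n" "inv_mat P * P = 1\<^sub>m n"
proof -
  show "inv_mat P \<in> carrier_mat n n" unfolding inv_mat_def using adj_mat(1)[OF P] by simp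
  have "P * inv_mat P = inverse (det P) \<cdot>\<^sub>m (P * adj_mat P)"
    unfolding inv_mat_def using P adj_mat(1)[OF P] by (simp add: mult_smult_distrib)
  also have "\<dots> = 1\<^sub>m n" unfolding adj_mat(2)[OF P] using d by (intro eq_matI) auto
  finally show "P * inv_mat P = 1\<^sub>m n" .
  have "inv_mat P * P = inverse (det P) \<cdot>\<^sub>m (adj_mat P * P)"
    unfolding inv_mat_def using P adj_mat(1)[OF P] by (simp add: mult_smult_assoc_mat)
  also have "\<dots> = 1\<^sub>m n" unfolding adj_mat(3)[OF P] using d by (intro eq_matI) auto
  finally show "inv_mat P * P = 1\<^sub>m n" .
qed

lemma kv_conj:
  assumes P: "P \<in> carrier_mat n n" and Q: "Q \<in> carrier_mat n n" and B: "B \<in> carrier_mat n n"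
    and QP: "Q * P = 1\<^sub>m n" and u: "u \<in> carrier_vec n"
  shows "kv (P * B * Q) (P *\<^sub>v u) i = P *\<^sub>v kv B u i"
proof (induction i)
  case 0 then show ?case by simp
next
  case (Suc i)
  have w: "kv B u i \<in> carrier_vec n" by (rule kv_carrier[OF B u])
  have "kv (P * B * Q) (P *\<^sub>v u) (Suc i) = (P * B * Q) *\<^sub>v (P *\<^sub>v kv B u i)"
    by (simp add: kv_Suc Suc.IH)
  also have "\<dots> = (P * B * Q * P) *\<^sub>v kv B u i"
    using P Q B w by (subst assoc_mult_mat_vec[symmetric, of _ n n P n]) auto
  also have "P * B * Q * P = P * B"
    using P Q B QP by (simp add: assoc_mult_mat[of _ n n _ n _ n])
  also have "(P * B) *\<^sub>v kv B u i = P *\<^sub>v kv B u (Suc i)"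
    using P B w by (simp add: kv_Suc assoc_mult_mat_vec)
  finally show ?case .
qed


definition blk :: "nat \<Rightarrow> nat \<Rightarrow> 'a::field poly \<Rightarrow> 'a mat \<Rightarrow> 'a mat \<Rightarrow> 'a mat" where
  "blk n d k X M' = four_block_mat (comp_mat d k) X (0\<^sub>m (n-d) d) M'"

context
  fixes n d :: nat and k :: "'a::field poly" and X M' :: "'a mat"
  assumes dn: "d \<le> n" and X: "X \<in> carrier_mat d (n-d)" and M': "M' \<in> carrier_mat (n-d) (n-d)"
begin

lemma blk_carrier: "blk n d k X M' \<in> carrier_mat n n"
  using four_block_carrier_mat[OF comp_mat_carrier M', of d k X "0\<^sub>m (n-d) d"] dn
  unfolding blk_def by simp

lemma blk_index_left: "i < n \<Longrightarrow> j < d \<Longrightarrow>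
  blk n d k X M' $$ (i,j) = (if i < d then comp_mat d k $$ (i,j) else 0)"
  unfolding blk_def using dn X M' by (subst index_mat_four_block) auto

lemma blk_col: "j < d \<Longrightarrow> col (blk n d k X M') j = vec n (\<lambda>i. if i < d then comp_mat d k $$ (i,j) else 0)"
  using blk_carrier blk_index_left dn by (intro eq_vecI) auto

lemma kv_blk_lt: "i < d \<Longrightarrow> kv (blk n d k X M') (unit_vec n 0) i = unit_vec n i"
proof (induction i)
  case 0 then show ?case by simp
next
  case (Suc i)
  then have "kv (blk n d k X M') (unit_vec n 0) (Suc i) = blk n d k X M' *\<^sub>v unit_vec n i"
    by (simp add: kv_Suc)
  also have "\<dots> = col (blk n d k X M') i"
    using Suc.prems dn by (intro mult_unit_vec[OF blk_carrier]) auto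
  also have "\<dots> = unit_vec n (Suc i)"
    using Suc.prems dn by (subst blk_col) (auto simp: comp_mat_index unit_vec_def intro!: eq_vecI)
  finally show ?case .
qed

lemma kv_blk_d: "0 < d \<Longrightarrow>
  kv (blk n d k X M') (unit_vec n 0) d = vec n (\<lambda>r. if r < d then - coeff k r else 0)"
proof -
  assume d: "0 < d"
  then obtain e where e: "d = Suc e" by (cases d) auto
  have "kv (blk n d k X M') (unit_vec n 0) d = blk n d k X M' *\<^sub>v unit_vec n e"
    using kv_blk_lt[of e] e by (simp add: kv_Suc)
  also have "\<dots> = col (blk n d k X M') e"
    using e dn by (intro mult_unit_vec[OF blk_carrier]) auto
  also have "\<dots> = vec n (\<lambda>r. if r < d then - coeff k r else 0)"
    using e dn by (subst blk_col) (auto simp: comp_mat_index intro!: eq_vecI)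
  finally show ?thesis .
qed

lemma char_poly_blk: "char_poly (blk n d k X M') = char_poly (comp_mat d k) * char_poly M'"
  unfolding blk_def by (rule char_poly_four_block_zero[OF comp_mat_carrier X M'])

end


lemma mult_vec_pad:
  fixes P :: "'a::field mat"
  assumes P: "P \<in> carrier_mat n n" and dn: "d \<le> n" and y: "y \<in> carrier_vec d"
    and L: "length L = d" and cols: "\<forall>i<d. col P i = L ! i"
  shows "mat_of_cols n L *\<^sub>v y = P *\<^sub>v vec n (\<lambda>r. if r < d then y $ r else 0)"
proof (intro eq_vecI)
  fix s assume "s < dim_vec (P *\<^sub>v vec n (\<lambda>r. if r < d then y $ r else 0))"
  then have s: "s < n" using P by simp
  have yL: "y \<in> carrier_vec (length L)" using y L by simp
  have "(mat_of_cols n L *\<^sub>v y) $ s = (\<Sum>i<length L. L ! i $ s * y $ i)"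
    by (rule mat_of_cols_mult_vec_index[OF yL s])
  also have "\<dots> = (\<Sum>i<d. P $$ (s, i) * y $ i)"
    using cols L P s dn by (intro sum.cong) (auto simp flip: cols)
  also have "\<dots> = (\<Sum>r\<in>{0..<n}. P $$ (s, r) * vec n (\<lambda>r. if r < d then y $ r else 0) $ r)"
    using dn by (intro sum.mono_neutral_cong_left) auto
  also have "\<dots> = (P *\<^sub>v vec n (\<lambda>r. if r < d then y $ r else 0)) $ s"
    using P s by (simp add: scalar_prod_def row_def)
  finally show "(mat_of_cols n L *\<^sub>v y) $ s = (P *\<^sub>v vec n (\<lambda>r. if r < d then y $ r else 0)) $ s" .
qed (use P in simp)

lemma vspan_Nil: "vspan n [] = {0\<^sub>v n}"
proof -
  have z: "mat_of_cols n [] *\<^sub>v x = 0\<^sub>v n" if "x \<in> carrier_vec 0" for x :: "'a::field vec"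
    using that by (intro eq_vecI) (auto simp: mat_of_cols_def scalar_prod_def)
  have "0\<^sub>v 0 \<in> (carrier_vec 0 :: 'a vec set)" by simp
  then have "(\<lambda>x. mat_of_cols n [] *\<^sub>v x) ` (carrier_vec 0 :: 'a vec set) = {0\<^sub>v n}"
    using z by (auto intro!: image_eqI[where x = "0\<^sub>v 0"])
  then show ?thesis unfolding vspan_def by simp
qed

definition divs :: "nat \<Rightarrow> 'a::field poly \<Rightarrow> 'a poly set" where
  "divs d f = {k. lead_coeff k = 1 \<and> degree k = d \<and> k dvd f}"

definition e0 :: "nat \<Rightarrow> nat \<Rightarrow> 'a::field vec" where
  "e0 n d = (if d = 0 then 0\<^sub>v n else unit_vec n 0)"

definition Sset :: "nat \<Rightarrow> nat \<Rightarrow> 'a::{finite,field} poly \<Rightarrow> ('a mat \<times> 'a poly \<times> 'a mat \<times> 'a mat) set" where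
  "Sset n d f = {(P,k,X,M'). P \<in> GL_mats n \<and> k \<in> divs d f \<and> X \<in> carrier_mat d (n-d) \<and>
      M' \<in> carrier_mat (n-d) (n-d) \<and> char_poly M' = f div k}"

definition Rset :: "nat \<Rightarrow> nat \<Rightarrow> 'a::{finite,field} poly \<Rightarrow> ('a mat \<times> 'a vec \<times> 'a mat) set" where
  "Rset n d f = {(M,v,P). M \<in> carrier_mat n n \<and> char_poly M = f \<and> v \<in> carrier_vec n \<and> good n M v d \<and>
      P \<in> GL_mats n \<and> (\<forall>i<d. col P i = kv M v i)}"

definition Phi :: "nat \<Rightarrow> nat \<Rightarrow> ('a::field mat \<times> 'a poly \<times> 'a mat \<times> 'a mat) \<Rightarrow> 'a mat \<times> 'a vec \<times> 'a mat" where
  "Phi n d = (\<lambda>(P,k,X,M'). (P * blk n d k X M' * inv_mat P, P *\<^sub>v e0 n d, P))"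

lemma Phi_into:
  assumes dn: "d \<le> n" and s: "s \<in> Sset n d f"
  shows "Phi n d s \<in> Rset n d f"
proof -
  obtain P k X M' where s_eq: "s = (P,k,X,M')" by (cases s) auto
  have P: "P \<in> carrier_mat n n" and dP: "det P \<noteq> 0" and k: "k \<in> divs d f"
    and X: "X \<in> carrier_mat d (n-d)" and M': "M' \<in> carrier_mat (n-d) (n-d)"
    and cM': "char_poly M' = f div k"
    using s unfolding s_eq Sset_def GL_mats_def by auto
  define B where "B = blk n d k X M'"
  define Q where "Q = inv_mat P"
  have B: "B \<in> carrier_mat n n" unfolding B_def by (rule blk_carrier[OF dn X M'])
  have Q: "Q \<in> carrier_mat n n" "P * Q = 1\<^sub>m n" "Q * P = 1\<^sub>m n"
    unfolding Q_def using inv_mat[OF P dP] by auto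
  define M where "M = P * B * Q"
  define v where "v = P *\<^sub>v e0 n d"
  have M: "M \<in> carrier_mat n n" unfolding M_def using P B Q by auto
  have e0c: "e0 n d \<in> carrier_vec n" unfolding e0_def by auto
  have v: "v \<in> carrier_vec n" unfolding v_def using mult_mat_vec_carrier[OF P e0c] .
  have "similar_mat M B" by (rule similar_matI[of M B P Q n]) (use P B Q M M_def in auto)
  then have "char_poly M = char_poly B" by (rule char_poly_similar)
  also have "\<dots> = char_poly (comp_mat d k) * char_poly M'"
    unfolding B_def by (rule char_poly_blk[OF dn X M'])
  also have "\<dots> = k * (f div k)"
  proof -
    have "char_poly (comp_mat d k) = k" using k char_poly_comp[of k d] unfolding divs_def by auto
    then show ?thesis using cM' by simp
  qed
  also have "\<dots> = f" using k unfolding divs_def by simp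
  finally have cM: "char_poly M = f" .
  have kvM: "kv M v i = P *\<^sub>v kv B (e0 n d) i" for i
    unfolding M_def v_def by (rule kv_conj[OF P Q(1) B Q(3) e0c])
  have goodcol: "good n M v d \<and> (\<forall>i<d. col P i = kv M v i)"
  proof (cases "d = 0")
    case True
    have "v = 0\<^sub>v n" unfolding v_def e0_def using True P by auto
    then show ?thesis using True unfolding good_def by (simp add: krylov_def indep_Nil vspan_Nil)
  next
    case False
    then have e0: "e0 n d = unit_vec n 0" unfolding e0_def by simp
    have kvi: "kv M v i = col P i" if "i < d" for i
    proof -
      have "kv M v i = P *\<^sub>v kv B (unit_vec n 0) i" using kvM[of i] unfolding e0 .
      also have "kv B (unit_vec n 0) i = unit_vec n i" unfolding B_def by (rule kv_blk_lt[OF dn X M' that])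
      finally have "kv M v i = P *\<^sub>v unit_vec n i" .
      also have "\<dots> = col P i" using that dn by (intro mult_unit_vec[OF P]) auto
      finally show ?thesis .
    qed
    have kr: "krylov M v d = take d (cols P)"
      using kvi P dn by (intro nth_equalityI) auto
    have "indep n (cols P)" using det_ne_0_iff_indep[OF P] dP by simp
    then have "indep n (take d (cols P) @ drop d (cols P))" by simp
    then have ind: "indep n (krylov M v d)" unfolding kr by (rule indep_prefix)
    define y where "y = vec d (\<lambda>r. - coeff k r)"
    have y: "y \<in> carrier_vec d" unfolding y_def by simp
    have "kv M v d = P *\<^sub>v vec n (\<lambda>r. if r < d then - coeff k r else 0)"
    proof -
      have "kv M v d = P *\<^sub>v kv B (unit_vec n 0) d" using kvM[of d] unfolding e0 .
      also have "kv B (unit_vec n 0) d = vec n (\<lambda>r. if r < d then - coeff k r else 0)"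
        unfolding B_def using False by (intro kv_blk_d[OF dn X M']) simp
      finally show ?thesis .
    qed
    also have "\<dots> = P *\<^sub>v vec n (\<lambda>r. if r < d then y $ r else 0)"
      unfolding y_def by (intro arg_cong[where f = "\<lambda>w. P *\<^sub>v w"] eq_vecI) auto
    also have "\<dots> = mat_of_cols n (krylov M v d) *\<^sub>v y"
      using kvi by (intro mult_vec_pad[OF P dn y, symmetric]) auto
    finally have "kv M v d \<in> vspan n (krylov M v d)" unfolding vspan_def using y by auto
    then show ?thesis using ind kvi unfolding good_def by auto
  qed
  show ?thesis unfolding s_eq Phi_def Rset_def GL_mats_def
    using M cM v goodcol P dP unfolding M_def v_def B_def Q_def by auto
qed


lemma degree_eqI': "coeff p d \<noteq> 0 \<Longrightarrow> (\<forall>j>d. coeff p j = 0) \<Longrightarrow> degree p = d"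
  by (meson antisym degree_le le_degree)

lemma Phi_onto:
  assumes dn: "d \<le> n" and r: "r \<in> Rset n d (f :: 'a::{finite,field} poly)"
  shows "\<exists>s\<in>Sset n d f. Phi n d s = r"
proof -
  obtain M v P where r_eq: "r = (M,v,P)" by (cases r) auto
  have M: "M \<in> carrier_mat n n" and cM: "char_poly M = f" and v: "v \<in> carrier_vec n"
    and g: "good n M v d" and P: "P \<in> carrier_mat n n" and dP: "det P \<noteq> 0"
    and cols: "\<forall>i<d. col P i = kv M v i"
    using r unfolding r_eq Rset_def GL_mats_def by auto
  define Q where "Q = inv_mat P"
  have Q: "Q \<in> carrier_mat n n" "P * Q = 1\<^sub>m n" "Q * P = 1\<^sub>m n"
    unfolding Q_def using inv_mat[OF P dP] by auto
  define A where "A = Q * M * P"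
  have A: "A \<in> carrier_mat n n" unfolding A_def using Q M P by auto
  obtain y where y: "y \<in> carrier_vec d" and ky: "kv M v d = mat_of_cols n (krylov M v d) *\<^sub>v y"
    using g unfolding good_def vspan_def by auto
  define k :: "'a poly" where "k = monom 1 d - (\<Sum>i<d. monom (y $ i) i)"
  have ck: "coeff k j = (if j = d then 1 else if j < d then - y $ j else 0)" for j
    unfolding k_def by (auto simp: coeff_sum coeff_monom)
  have dk: "degree k = d" using ck by (intro degree_eqI') auto
  have lk: "lead_coeff k = 1" using ck dk by simp
  define X where "X = mat d (n-d) (\<lambda>(i,j). A $$ (i, j+d))"
  define M'' where "M'' = mat (n-d) (n-d) (\<lambda>(i,j). A $$ (i+d, j+d))"
  have X: "X \<in> carrier_mat d (n-d)" unfolding X_def by simp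
  have M'': "M'' \<in> carrier_mat (n-d) (n-d)" unfolding M''_def by simp
  have QPu: "Q *\<^sub>v (P *\<^sub>v u) = u" if "u \<in> carrier_vec n" for u
  proof -
    have "Q *\<^sub>v (P *\<^sub>v u) = (Q * P) *\<^sub>v u" by (rule assoc_mult_mat_vec[OF Q(1) P that, symmetric])
    then show ?thesis using Q that by simp
  qed
  have colA: "col A j = Q *\<^sub>v kv M v (Suc j)" if j: "j < d" for j
  proof -
    have "col A j = A *\<^sub>v unit_vec n j" using j dn by (intro mult_unit_vec[OF A, symmetric]) auto
    also have "\<dots> = Q *\<^sub>v (M *\<^sub>v (P *\<^sub>v unit_vec n j))" 
    proof -
      have QM: "Q * M \<in> carrier_mat n n" using Q(1) M by simp
      have Pu: "P *\<^sub>v unit_vec n j \<in> carrier_vec n" using P by simp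
      have "A *\<^sub>v unit_vec n j = (Q * M) *\<^sub>v (P *\<^sub>v unit_vec n j)"
        unfolding A_def by (rule assoc_mult_mat_vec[OF QM P unit_vec_carrier])
      also have "\<dots> = Q *\<^sub>v (M *\<^sub>v (P *\<^sub>v unit_vec n j))"
        by (rule assoc_mult_mat_vec[OF Q(1) M Pu])
      finally show ?thesis .
    qed
    also have "P *\<^sub>v unit_vec n j = col P j" using j dn by (intro mult_unit_vec[OF P]) auto
    also have "\<dots> = kv M v j" using cols j by simp
    finally show ?thesis by (simp add: kv_Suc)
  qed
  have Aleft: "A $$ (i,j) = (if i < d then comp_mat d k $$ (i,j) else 0)" if i: "i < n" and j: "j < d" for i j
  proof (cases "Suc j < d")
    case True
    have "kv M v (Suc j) = P *\<^sub>v unit_vec n (Suc j)"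
      using cols True dn by (simp add: mult_unit_vec[OF P])
    then have "col A j = unit_vec n (Suc j)" using colA[OF j] QPu by simp
    moreover have "A $$ (i,j) = col A j $ i" using A i j dn by simp
    ultimately have "A $$ (i,j) = unit_vec n (Suc j) $ i" by simp
    then show ?thesis using True i j by (auto simp: comp_mat_index unit_vec_def)
  next
    case False
    then have jd: "Suc j = d" using j by simp
    have "kv M v (Suc j) = P *\<^sub>v vec n (\<lambda>r. if r < d then y $ r else 0)"
      unfolding jd ky using cols by (intro mult_vec_pad[OF P dn y]) auto
    then have "col A j = vec n (\<lambda>r. if r < d then y $ r else 0)" using colA[OF j] QPu by simp
    moreover have "A $$ (i,j) = col A j $ i" using A i j dn by simp
    ultimately have "A $$ (i,j) = vec n (\<lambda>r. if r < d then y $ r else 0) $ i" by simp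
    then show ?thesis using jd i j ck by (auto simp: comp_mat_index)
  qed
  have Ablk: "A = blk n d k X M''"
  proof (rule eq_matI)
    fix i j assume "i < dim_row (blk n d k X M'')" "j < dim_col (blk n d k X M'')"
    then have i: "i < n" and j: "j < n" using blk_carrier[OF dn X M'', of k] by auto
    show "A $$ (i,j) = blk n d k X M'' $$ (i,j)"
    proof (cases "j < d")
      case True
      then show ?thesis using Aleft[OF i True] blk_index_left[OF dn X M'' i True] by simp
    next
      case False
      then show ?thesis unfolding blk_def using i j dn X M''
        by (subst index_mat_four_block) (auto simp: X_def M''_def)
    qed
  qed (use A blk_carrier[OF dn X M'', of k] in auto)
  have MPAQ: "M = P * A * Q"
  proof -
    have MP: "M * P \<in> carrier_mat n n" using M P by simp
    have "Q * M * P = Q * (M * P)" by (rule assoc_mult_mat[OF Q(1) M P])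
    then have "P * A = P * (Q * (M * P))" unfolding A_def by simp
    also have "\<dots> = (P * Q) * (M * P)" by (rule assoc_mult_mat[OF P Q(1) MP, symmetric])
    also have "\<dots> = M * P" using Q(2) left_mult_one_mat[OF MP] by simp
    finally have "P * A * Q = M * P * Q" by simp
    also have "\<dots> = M * (P * Q)" by (rule assoc_mult_mat[OF M P Q(1)])
    also have "\<dots> = M" using Q(2) right_mult_one_mat[OF M] by simp
    finally show ?thesis by simp
  qed
  have "similar_mat M A" by (rule similar_matI[of M A P Q n]) (use P A Q MPAQ in auto)
  then have "f = char_poly A" using cM char_poly_similar by metis
  also have "\<dots> = char_poly (comp_mat d k) * char_poly M''"
    unfolding Ablk by (rule char_poly_blk[OF dn X M''])
  also have "char_poly (comp_mat d k) = k" by (rule char_poly_comp[OF dk lk])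
  finally have fk: "f = k * char_poly M''" .
  have k0: "k \<noteq> 0" using lk by auto
  have kd: "k \<in> divs d f" unfolding divs_def using dk lk fk by auto
  have cM'': "char_poly M'' = f div k" using fk k0 by simp
  have ve: "v = P *\<^sub>v e0 n d"
  proof (cases "d = 0")
    case True
    then have "v \<in> vspan n []" using g unfolding good_def krylov_def by simp
    then have "v = 0\<^sub>v n" by (simp add: vspan_Nil)
    moreover have "P *\<^sub>v 0\<^sub>v n = 0\<^sub>v n" using P by (intro eq_vecI) (auto simp: scalar_prod_def)
    ultimately show ?thesis using True unfolding e0_def by simp
  next
    case False
    then have "col P 0 = v" using cols by simp
    moreover have "P *\<^sub>v unit_vec n 0 = col P 0" using False dn by (intro mult_unit_vec[OF P]) auto
    ultimately show ?thesis using False unfolding e0_def by simp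
  qed
  have "(P, k, X, M'') \<in> Sset n d f" unfolding Sset_def GL_mats_def using P dP kd X M'' cM'' by auto
  moreover have "Phi n d (P, k, X, M'') = r"
    unfolding Phi_def r_eq using MPAQ Ablk ve Q_def by simp
  ultimately show ?thesis by blast
qed


lemma conj_cancel:
  fixes P Q B :: "'a::comm_ring_1 mat"
  assumes P: "P \<in> carrier_mat n n" and Q: "Q \<in> carrier_mat n n" and B: "B \<in> carrier_mat n n"
    and QP: "Q * P = 1\<^sub>m n"
  shows "Q * (P * B * Q) * P = B"
proof -
  have PB: "P * B \<in> carrier_mat n n" using P B by simp
  have BQ: "B * Q \<in> carrier_mat n n" using Q B by simp
  have "Q * (P * B * Q) = (Q * (P * B)) * Q" by (rule assoc_mult_mat[OF Q PB Q, symmetric])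
  also have "Q * (P * B) = (Q * P) * B" by (rule assoc_mult_mat[OF Q P B, symmetric])
  also have "\<dots> = B" using QP left_mult_one_mat[OF B] by simp
  finally have "Q * (P * B * Q) * P = B * Q * P" by simp
  also have "\<dots> = B * (Q * P)" by (rule assoc_mult_mat[OF B Q P])
  also have "\<dots> = B" using QP right_mult_one_mat[OF B] by simp
  finally show ?thesis .
qed

context
  fixes n d :: nat and k :: "'a::field poly" and X M' :: "'a mat"
  assumes dn: "d \<le> n" and X: "X \<in> carrier_mat d (n-d)" and M': "M' \<in> carrier_mat (n-d) (n-d)"
begin

lemma blk_X_entry: "i < d \<Longrightarrow> j < n - d \<Longrightarrow> X $$ (i,j) = blk n d k X M' $$ (i, j + d)"
  unfolding blk_def using dn X M' by (subst index_mat_four_block) auto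

lemma blk_M_entry: "i < n - d \<Longrightarrow> j < n - d \<Longrightarrow> M' $$ (i,j) = blk n d k X M' $$ (i + d, j + d)"
  unfolding blk_def using dn X M' by (subst index_mat_four_block) auto

lemma blk_k_entry: "i < d \<Longrightarrow> blk n d k X M' $$ (i, d - 1) = - coeff k i"
  using blk_index_left[OF dn X M', of i "d - 1"] dn by (simp add: comp_mat_index)

end

lemma Phi_inj:
  assumes dn: "d \<le> n"
  shows "inj_on (Phi n d) (Sset n d (f :: 'a::{finite,field} poly))"
proof (rule inj_onI)
  fix s1 s2 assume s1: "s1 \<in> Sset n d f" and s2: "s2 \<in> Sset n d f" and eq: "Phi n d s1 = Phi n d s2"
  obtain P1 k1 X1 M1 where s1e: "s1 = (P1,k1,X1,M1)" by (cases s1) auto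
  obtain P2 k2 X2 M2 where s2e: "s2 = (P2,k2,X2,M2)" by (cases s2) auto
  have P1: "P1 \<in> carrier_mat n n" "det P1 \<noteq> 0" and k1: "k1 \<in> divs d f"
    and X1: "X1 \<in> carrier_mat d (n-d)" and M1: "M1 \<in> carrier_mat (n-d) (n-d)"
    using s1 unfolding s1e Sset_def GL_mats_def by auto
  have k2: "k2 \<in> divs d f"
    and X2: "X2 \<in> carrier_mat d (n-d)" and M2: "M2 \<in> carrier_mat (n-d) (n-d)"
    using s2 unfolding s2e Sset_def GL_mats_def by auto
  have PP: "P2 = P1" using eq unfolding s1e s2e Phi_def by simp
  define Q where "Q = inv_mat P1"
  have Q: "Q \<in> carrier_mat n n" "Q * P1 = 1\<^sub>m n" unfolding Q_def using inv_mat[OF P1] by auto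
  have eqM: "P1 * blk n d k1 X1 M1 * Q = P1 * blk n d k2 X2 M2 * Q"
    using eq unfolding s1e s2e Phi_def PP Q_def by simp
  have B: "blk n d k1 X1 M1 = blk n d k2 X2 M2"
    using conj_cancel[OF P1(1) Q(1) blk_carrier[OF dn X1 M1] Q(2)]
      conj_cancel[OF P1(1) Q(1) blk_carrier[OF dn X2 M2] Q(2)] eqM by metis
  have kk: "k1 = k2"
  proof (rule poly_eqI)
    fix j
    have d1: "degree k1 = d" "lead_coeff k1 = 1" and d2: "degree k2 = d" "lead_coeff k2 = 1"
      using k1 k2 unfolding divs_def by auto
    show "coeff k1 j = coeff k2 j"
    proof (cases "j < d")
      case True
      then show ?thesis using blk_k_entry[OF dn X1 M1 True, of k1] blk_k_entry[OF dn X2 M2 True, of k2] B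
        by simp
    next
      case False
      then show ?thesis using d1 d2 by (cases "j = d") (auto simp: coeff_eq_0)
    qed
  qed
  have XX: "X1 = X2"
    using X1 X2 blk_X_entry[OF dn X1 M1, of _ _ k1] blk_X_entry[OF dn X2 M2, of _ _ k2] B
    by (intro eq_matI) auto
  have MM: "M1 = M2"
    using M1 M2 blk_M_entry[OF dn X1 M1, of _ _ k1] blk_M_entry[OF dn X2 M2, of _ _ k2] B
    by (intro eq_matI) auto
  show "s1 = s2" unfolding s1e s2e using PP kk XX MM by simp
qed

lemma Phi_bij:
  assumes dn: "d \<le> n"
  shows "bij_betw (Phi n d) (Sset n d (f :: 'a::{finite,field} poly)) (Rset n d f)"
  unfolding bij_betw_def using Phi_inj[OF dn] Phi_into[OF dn] Phi_onto[OF dn] by blast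


definition Nc :: "nat \<Rightarrow> 'a::{finite,field} poly \<Rightarrow> nat" where
  "Nc m h = card {M \<in> carrier_mat m m. char_poly M = h}"

definition Base :: "nat \<Rightarrow> nat \<Rightarrow> 'a::{finite,field} poly \<Rightarrow> ('a mat \<times> 'a vec) set" where
  "Base n d f = {(M,v). M \<in> carrier_mat n n \<and> char_poly M = f \<and> v \<in> carrier_vec n \<and> good n M v d}"

definition gp :: "nat \<Rightarrow> nat \<Rightarrow> nat \<Rightarrow> nat" where
  "gp q n d = (\<Prod>j\<in>{d..<n}. q ^ n - q ^ j)"

lemma finite_deg_le: "finite {p :: 'a::{finite,zero} poly. degree p \<le> m}"
proof -
  have "{p :: 'a poly. degree p \<le> m} \<subseteq> (\<lambda>xs. Poly xs) ` {xs. set xs \<subseteq> UNIV \<and> length xs = Suc m}"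
  proof
    fix p :: "'a poly" assume "p \<in> {p. degree p \<le> m}"
    then have dp: "degree p \<le> m" by simp
    have lc: "length (coeffs p) \<le> Suc m"
      using dp by (cases "p = 0") (auto simp: length_coeffs)
    define xs where "xs = coeffs p @ replicate (Suc m - length (coeffs p)) 0"
    have "length xs = Suc m" unfolding xs_def using lc by simp
    moreover have "Poly xs = p" unfolding xs_def by (simp add: Poly_append_replicate_zero)
    ultimately show "p \<in> (\<lambda>xs. Poly xs) ` {xs. set xs \<subseteq> UNIV \<and> length xs = Suc m}" by force
  qed
  moreover have "finite {xs :: 'a list. set xs \<subseteq> UNIV \<and> length xs = Suc m}"
    by (rule finite_lists_length_eq) simp
  ultimately show ?thesis by (meson finite_imageI finite_subset)
qed

lemma finite_divs: "finite (divs d (f :: 'a::{finite,field} poly))"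
  by (rule finite_subset[OF _ finite_deg_le[of d]]) (auto simp: divs_def)

lemma finite_GL: "finite (GL_mats n :: 'a::{finite,field} mat set)"
  unfolding GL_mats_def by (rule finite_subset[OF _ finite_carrier_mat[of n n]]) auto

lemma finite_charset: "finite {M \<in> carrier_mat m m. char_poly M = (h :: 'a::{finite,field} poly)}"
  by (rule finite_subset[OF _ finite_carrier_mat[of m m]]) auto

lemma card_Sset:
  "card (Sset n d (f :: 'a::{finite,field} poly)) = card (GL_mats n :: 'a mat set) *
     (\<Sum>k\<in>divs d f. card (UNIV :: 'a set) ^ (d * (n - d)) * Nc (n - d) (f div k))"
proof -
  have eq: "Sset n d f = GL_mats n \<times> (SIGMA k:divs d f. (carrier_mat d (n-d) :: 'a mat set) \<times>
      {M' \<in> carrier_mat (n-d) (n-d). char_poly M' = f div k})"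
    unfolding Sset_def by auto
  have "card (SIGMA k:divs d f. (carrier_mat d (n-d) :: 'a mat set) \<times> {M' \<in> carrier_mat (n-d) (n-d). char_poly M' = f div k})
    = (\<Sum>k\<in>divs d f. card ((carrier_mat d (n-d) :: 'a mat set) \<times> {M' \<in> carrier_mat (n-d) (n-d). char_poly M' = f div k}))"
    apply (subst card_SigmaI)
      apply (rule finite_divs)
     apply (auto intro!: finite_cartesian_product finite_carrier_mat finite_charset)[1]
    apply (rule refl)
    done
  also have "\<dots> = (\<Sum>k\<in>divs d f. card (UNIV :: 'a set) ^ (d * (n - d)) * Nc (n - d) (f div k))"
    by (intro sum.cong refl) (simp add: card_cartesian_product card_carrier_mat Nc_def)
  finally show ?thesis unfolding eq card_cartesian_product by simp
qed

lemma card_Rset: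
  assumes dn: "d \<le> n"
  shows "card (Rset n d (f :: 'a::{finite,field} poly)) = card (Base n d f) * gp (card (UNIV :: 'a set)) n d"
proof -
  define Fib where "Fib = (\<lambda>(M :: 'a mat, v :: 'a vec). {P \<in> carrier_mat n n. det P \<noteq> 0 \<and>
      (\<forall>i<length (krylov M v d). col P i = krylov M v d ! i)})"
  have eq: "Rset n d f = (\<lambda>((M,v),P). (M,v,P)) ` (SIGMA mv:Base n d f. Fib mv)"
    unfolding Rset_def Base_def Fib_def GL_mats_def by (auto simp: image_iff)
  have inj: "inj_on (\<lambda>((M,v),P). (M,v,P)) (SIGMA mv:Base n d f. Fib mv)"
    by (auto simp: inj_on_def)
  have finB: "finite (Base n d f)"
    by (rule finite_subset[of _ "carrier_mat n n \<times> carrier_vec n"])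
      (auto simp: Base_def intro: finite_carrier_mat finite_carrier_vec)
  have cF: "card (Fib mv) = gp (card (UNIV :: 'a set)) n d" if "mv \<in> Base n d f" for mv
  proof -
    obtain M v where mv: "mv = (M,v)" by (cases mv) auto
    have "indep n (krylov M v d)" using that unfolding mv Base_def good_def by auto
    from card_GL_prefix[OF this] show ?thesis unfolding mv Fib_def gp_def by simp
  qed
  have "card (Rset n d f) = card (SIGMA mv:Base n d f. Fib mv)"
    unfolding eq by (rule card_image[OF inj])
  also have "\<dots> = (\<Sum>mv\<in>Base n d f. card (Fib mv))"
    by (rule card_SigmaI[OF finB]) (auto simp: Fib_def intro: finite_subset[OF _ finite_carrier_mat])
  also have "\<dots> = card (Base n d f) * gp (card (UNIV :: 'a set)) n d" using cF by simp
  finally show ?thesis .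
qed

lemma card_GL: "card (GL_mats n :: 'a::{finite,field} mat set) = gp (card (UNIV :: 'a set)) n 0"
proof -
  have "card {P \<in> (carrier_mat n n :: 'a mat set). det P \<noteq> 0 \<and>
      (\<forall>i<length ([] :: 'a vec list). col P i = ([] :: 'a vec list) ! i)}
     = (\<Prod>j\<in>{length ([] :: 'a vec list)..<n}. card (UNIV :: 'a set) ^ n - card (UNIV :: 'a set) ^ j)"
    by (rule card_GL_prefix[OF indep_Nil])
  then show ?thesis unfolding gp_def GL_mats_def by simp
qed

lemma gp_shift:
  assumes dn: "d \<le> n"
  shows "gp q n d = q ^ (d * (n - d)) * gp q (n - d) 0"
proof -
  have "gp q n d = (\<Prod>j\<in>{0 + d..<(n - d) + d}. q ^ n - q ^ j)" unfolding gp_def using dn by simp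
  also have "\<dots> = (\<Prod>i\<in>{0..<n - d}. q ^ n - q ^ (i + d))" by (rule prod.shift_bounds_nat_ivl)
  also have "\<dots> = (\<Prod>i\<in>{0..<n - d}. q ^ d * (q ^ (n - d) - q ^ i))"
  proof (rule prod.cong[OF refl])
    fix i assume "i \<in> {0..<n - d}"
    have e1: "q ^ n = q ^ d * q ^ (n - d)" using dn by (simp flip: power_add)
    have e2: "q ^ (i + d) = q ^ d * q ^ i" by (simp add: power_add)
    have "q ^ d * (q ^ (n - d) - q ^ i) = q ^ d * q ^ (n - d) - q ^ d * q ^ i" by (rule diff_mult_distrib2)
    then show "q ^ n - q ^ (i + d) = q ^ d * (q ^ (n - d) - q ^ i)" unfolding e1 e2 by simp
  qed
  also have "\<dots> = (\<Prod>i\<in>{0..<n - d}. q ^ d) * (\<Prod>i\<in>{0..<n - d}. q ^ (n - d) - q ^ i)"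
    by (rule prod.distrib)
  also have "\<dots> = (q ^ d) ^ (n - d) * gp q (n - d) 0" unfolding gp_def by simp
  finally show ?thesis by (simp add: power_mult)
qed

lemma gp_pos: assumes q: "q \<ge> 2" shows "gp q n 0 > 0"
  unfolding gp_def
proof (intro prod_pos ballI)
  fix j assume "j \<in> {0..<n}"
  then have "j < n" by simp
  then have "q ^ j < q ^ n" using q by (intro power_strict_increasing) auto
  then show "0 < q ^ n - q ^ j" by simp
qed

lemma Base_card_eq:
  assumes dn: "d \<le> n"
  shows "card (Base n d (f :: 'a::{finite,field} poly)) * gp (card (UNIV :: 'a set)) (n - d) 0 =
    gp (card (UNIV :: 'a set)) n 0 * (\<Sum>k\<in>divs d f. Nc (n - d) (f div k))"
proof -
  let ?q = "card (UNIV :: 'a set)"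
  have "card (Base n d f) * gp ?q n d = card (Rset n d f)" using card_Rset[OF dn, of f] by simp
  also have "\<dots> = card (Sset n d f)" using bij_betw_same_card[OF Phi_bij[OF dn, of f]] by simp
  also have "\<dots> = gp ?q n 0 * (?q ^ (d * (n - d)) * (\<Sum>k\<in>divs d f. Nc (n - d) (f div k)))"
    unfolding card_Sset card_GL by (simp add: sum_distrib_left)
  finally have "?q ^ (d * (n - d)) * (card (Base n d f) * gp ?q (n - d) 0) =
      ?q ^ (d * (n - d)) * (gp ?q n 0 * (\<Sum>k\<in>divs d f. Nc (n - d) (f div k)))"
    unfolding gp_shift[OF dn] by (simp add: ac_simps)
  moreover have "?q ^ (d * (n - d)) > 0" by (simp add: finite_UNIV_card_ge_0)
  ultimately show ?thesis by simp
qed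

lemma total_card:
  "card {(M,v). M \<in> carrier_mat n n \<and> char_poly M = (f :: 'a::{finite,field} poly) \<and> (v :: 'a vec) \<in> carrier_vec n}
     = (\<Sum>d\<in>{..n}. card (Base n d f))"
proof -
  have eq: "{(M,v). M \<in> carrier_mat n n \<and> char_poly M = f \<and> (v :: 'a vec) \<in> carrier_vec n} = (\<Union>d\<in>{..n}. Base n d f)"
  proof (intro equalityI subsetI)
    fix x assume x: "x \<in> {(M,v). M \<in> carrier_mat n n \<and> char_poly M = f \<and> (v :: 'a vec) \<in> carrier_vec n}"
    obtain M v where xe: "x = (M,v)" by (cases x) auto
    have M: "M \<in> carrier_mat n n" and v: "v \<in> carrier_vec n" and c: "char_poly M = f" using x xe by auto
    obtain d where "d \<le> n" "good n M v d" using good_exists[OF M v] by blast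
    then show "x \<in> (\<Union>d\<in>{..n}. Base n d f)" unfolding xe Base_def using M v c by auto
  next
    fix x assume "x \<in> (\<Union>d\<in>{..n}. Base n d f)"
    then show "x \<in> {(M,v). M \<in> carrier_mat n n \<and> char_poly M = f \<and> (v :: 'a vec) \<in> carrier_vec n}"
      unfolding Base_def by auto
  qed
  have finB: "finite (Base n d f)" for d
    by (rule finite_subset[of _ "carrier_mat n n \<times> carrier_vec n"])
      (auto simp: Base_def intro: finite_carrier_mat finite_carrier_vec)
  have disj: "Base n d1 f \<inter> Base n d2 f = {}" if "d1 \<noteq> d2" for d1 d2
  proof (rule ccontr)
    assume "Base n d1 f \<inter> Base n d2 f \<noteq> {}"
    then obtain M v where "(M,v) \<in> Base n d1 f" "(M,v) \<in> Base n d2 f" by auto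
    then have "M \<in> carrier_mat n n" "v \<in> carrier_vec n" "good n M v d1" "good n M v d2"
      unfolding Base_def by auto
    then have "d1 = d2" by (rule good_unique)
    then show False using that by simp
  qed
  show ?thesis unfolding eq
    by (rule card_UN_disjoint) (use finB disj in auto)
qed

lemma total_card2:
  "card {(M,v). M \<in> carrier_mat n n \<and> char_poly M = (f :: 'a::{finite,field} poly) \<and> (v :: 'a vec) \<in> carrier_vec n}
     = Nc n f * card (UNIV :: 'a set) ^ n"
proof -
  have "{(M,v). M \<in> carrier_mat n n \<and> char_poly M = f \<and> (v :: 'a vec) \<in> carrier_vec n} =
     {M \<in> carrier_mat n n. char_poly M = f} \<times> carrier_vec n" by auto
  then show ?thesis by (simp add: card_cartesian_product Nc_def card_carrier_vec)
qed


definition mdivs :: "'a::field poly \<Rightarrow> 'a poly set" where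
  "mdivs f = {k. lead_coeff k = 1 \<and> k dvd f}"

definition Pn :: "'a::{finite,field} poly \<Rightarrow> real" where
  "Pn h = real (Nc (degree h) h) / real (gp (card (UNIV :: 'a set)) (degree h) 0)"

lemma gp_pos': "gp (card (UNIV :: 'a::{finite,field} set)) m 0 > 0"
  by (rule gp_pos[OF card_UNIV_ge2])

lemma ident1:
  "real (card (UNIV :: 'a set) ^ n) * real (Nc n (f :: 'a::{finite,field} poly)) / real (gp (card (UNIV :: 'a set)) n 0)
   = (\<Sum>d\<in>{..n}. \<Sum>k\<in>divs d f. real (Nc (n - d) (f div k)) / real (gp (card (UNIV :: 'a set)) (n - d) 0))"
proof -
  let ?q = "card (UNIV :: 'a set)"
  let ?g = "\<lambda>m. real (gp ?q m 0)"
  have gpos: "?g m > 0" for m using gp_pos'[where 'a='a, of m] by simp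
  have A: "?q ^ n * Nc n f = (\<Sum>d\<in>{..n}. card (Base n d f))"
    using total_card[of n f] total_card2[of n f] by (simp add: mult.commute)
  have "real (?q ^ n) * real (Nc n f) = (\<Sum>d\<in>{..n}. real (card (Base n d f)))"
    using arg_cong[OF A, of real] by (simp only: of_nat_mult of_nat_sum)
  then have e1: "real (?q ^ n) * real (Nc n f) / ?g n = (\<Sum>d\<in>{..n}. real (card (Base n d f)) / ?g n)"
    by (simp add: sum_divide_distrib)
  have e2: "real (card (Base n d f)) / ?g n = (\<Sum>k\<in>divs d f. real (Nc (n - d) (f div k)) / ?g (n - d))"
    if "d \<in> {..n}" for d
  proof -
    have dn: "d \<le> n" using that by simp
    have "real (card (Base n d f)) * ?g (n - d) = ?g n * (\<Sum>k\<in>divs d f. real (Nc (n - d) (f div k)))"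
      using arg_cong[OF Base_card_eq[OF dn, of f], of real] by simp
    then have "real (card (Base n d f)) / ?g n = (\<Sum>k\<in>divs d f. real (Nc (n - d) (f div k))) / ?g (n - d)"
      using gpos[of n] gpos[of "n - d"] by (subst frac_eq_eq) (simp_all add: mult.commute)
    also have "\<dots> = (\<Sum>k\<in>divs d f. real (Nc (n - d) (f div k)) / ?g (n - d))"
      by (rule sum_divide_distrib)
    finally show ?thesis .
  qed
  show ?thesis unfolding e1 using e2 by (intro sum.cong) auto
qed

lemma divs_mdivs:
  assumes f0: "f \<noteq> 0"
  shows "mdivs f = (\<Union>d\<in>{..degree f}. divs d (f :: 'a::field poly))"
  unfolding mdivs_def divs_def using dvd_imp_degree_le[OF _ f0] by auto

lemma finite_mdivs:
  assumes f0: "(f :: 'a::{finite,field} poly) \<noteq> 0"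
  shows "finite (mdivs f)"
proof -
  have "mdivs f \<subseteq> {p. degree p \<le> degree f} \<union> {0}" 
    unfolding mdivs_def using f0 by (auto intro: dvd_imp_degree_le)
  moreover have "finite ({p :: 'a poly. degree p \<le> degree f} \<union> {0})" using finite_deg_le by simp
  ultimately show ?thesis by (rule finite_subset)
qed

lemma sum_divs_mdivs:
  assumes f0: "f \<noteq> 0"
  shows "(\<Sum>d\<in>{..degree f}. \<Sum>k\<in>divs d f. F k) = (\<Sum>k\<in>mdivs (f :: 'a::{finite,field} poly). F k)"
proof -
  have "(\<Sum>k\<in>mdivs f. F k) = (\<Sum>k\<in>(\<Union>d\<in>{..degree f}. divs d f). F k)" unfolding divs_mdivs[OF f0] ..
  also have "\<dots> = (\<Sum>d\<in>{..degree f}. \<Sum>k\<in>divs d f. F k)"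
    by (rule sum.UNION_disjoint) (simp, simp add: finite_divs, auto simp: divs_def)
  finally show ?thesis by simp
qed

lemma mdivs_div:
  assumes f: "lead_coeff f = 1" and k: "k \<in> mdivs f"
  shows "f div k \<in> mdivs f" "f div (f div k) = k" "f = k * (f div k)"
proof -
  have kf: "k dvd f" and lk: "lead_coeff k = 1" using k unfolding mdivs_def by auto
  have k0: "k \<noteq> 0" using lk by auto
  show fe: "f = k * (f div k)" using kf by simp
  have f0: "f \<noteq> 0" using f by auto
  have h0: "f div k \<noteq> 0" using fe f0 by auto
  have "lead_coeff (k * (f div k)) = lead_coeff k * lead_coeff (f div k)"
    by (rule lead_coeff_mult)
  then have "lead_coeff f = lead_coeff k * lead_coeff (f div k)" using fe by metis
  then have "lead_coeff (f div k) = 1" using f lk by simp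
  moreover have "f div k dvd f" using fe by (metis dvd_triv_right)
  ultimately show "f div k \<in> mdivs f" unfolding mdivs_def by simp
  show "f div (f div k) = k" using fe h0 by (metis nonzero_mult_div_cancel_right)
qed

lemma Pn_recursion:
  assumes f: "lead_coeff (f :: 'a::{finite,field} poly) = 1"
  shows "real (card (UNIV :: 'a set)) ^ degree f * Pn f = (\<Sum>h\<in>mdivs f. Pn h)"
proof -
  let ?q = "card (UNIV :: 'a set)"
  let ?n = "degree f"
  have f0: "f \<noteq> 0" using f by auto
  have "real (?q) ^ ?n * Pn f = real (?q ^ ?n) * real (Nc ?n f) / real (gp ?q ?n 0)"
    unfolding Pn_def by simp
  also have "\<dots> = (\<Sum>d\<in>{..?n}. \<Sum>k\<in>divs d f. real (Nc (?n - d) (f div k)) / real (gp ?q (?n - d) 0))"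
    by (rule ident1)
  also have "\<dots> = (\<Sum>d\<in>{..?n}. \<Sum>k\<in>divs d f. real (Nc (?n - degree k) (f div k)) / real (gp ?q (?n - degree k) 0))"
    by (intro sum.cong refl) (auto simp: divs_def)
  also have "\<dots> = (\<Sum>k\<in>mdivs f. real (Nc (?n - degree k) (f div k)) / real (gp ?q (?n - degree k) 0))"
    by (rule sum_divs_mdivs[OF f0])
  also have "\<dots> = (\<Sum>k\<in>mdivs f. Pn (f div k))"
  proof (intro sum.cong refl)
    fix k assume k: "k \<in> mdivs f"
    have fe: "f = k * (f div k)" by (rule mdivs_div(3)[OF f k])
    have k0: "k \<noteq> 0" and h0: "f div k \<noteq> 0" using fe f0 by auto
    have "degree (k * (f div k)) = degree k + degree (f div k)" by (rule degree_mult_eq[OF k0 h0])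
    then have "?n = degree k + degree (f div k)" using fe by metis
    then have "?n - degree k = degree (f div k)" by simp
    then show "real (Nc (?n - degree k) (f div k)) / real (gp ?q (?n - degree k) 0) = Pn (f div k)"
      unfolding Pn_def by simp
  qed
  also have "\<dots> = (\<Sum>h\<in>mdivs f. Pn h)"
    by (rule sum.reindex_bij_witness[where i = "\<lambda>k. f div k" and j = "\<lambda>k. f div k"])
      (auto simp: mdivs_div(1,2)[OF f])
  finally show ?thesis .
qed

lemma det_ne_0_char_poly:
  assumes A: "(A :: 'a::field mat) \<in> carrier_mat n n"
  shows "det A \<noteq> 0 \<longleftrightarrow> poly (char_poly A) 0 \<noteq> 0"
proof -
  have "char_matrix A 0 = A" unfolding char_matrix_def using A by (intro eq_matI) auto
  then show ?thesis using eigenvalue_det[OF A, of 0] eigenvalue_root_char_poly[OF A, of 0] by simp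
qed

lemma P_GL_eq_Pn:
  assumes f: "lead_coeff (f :: 'a::{finite,field} poly) = 1" and f0: "poly f 0 \<noteq> 0"
  shows "P_GL f = Pn f"
proof (cases "f = 1")
  case True
  have "carrier_mat 0 0 = {M \<in> carrier_mat 0 0. char_poly (M :: 'a mat) = 1}"
    by (auto simp: char_poly_def)
  then have "Nc 0 (1 :: 'a poly) = card (carrier_mat 0 0 :: 'a mat set)" unfolding Nc_def by simp
  also have "\<dots> = 1" by (simp add: card_carrier_mat)
  finally show ?thesis using True unfolding P_GL_def Pn_def gp_def by simp
next
  case False
  have "{M \<in> GL_mats (degree f). char_poly M = f} = {M \<in> carrier_mat (degree f) (degree f). char_poly M = f}"
    unfolding GL_mats_def using det_ne_0_char_poly f0 by auto
  then show ?thesis using False unfolding P_GL_def Pn_def Nc_def card_GL by simp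
qed

lemma P_GL_zero:
  assumes f: "lead_coeff (f :: 'a::{finite,field} poly) = 1" and f0: "poly f 0 = 0"
  shows "P_GL f = 0"
proof -
  have "f \<noteq> 1" using f0 by auto
  moreover have "{M \<in> GL_mats (degree f). char_poly M = f} = {}"
    unfolding GL_mats_def using det_ne_0_char_poly f0 by auto
  then have "card {M \<in> GL_mats (degree f). char_poly M = f} = 0" by (simp only: card.empty)
  ultimately show ?thesis unfolding P_GL_def by simp
qed


lemma mdivs_basic:
  assumes f: "lead_coeff (f :: 'a::field poly) = 1"
  shows "1 \<in> mdivs f" "f \<in> mdivs f"
  using f unfolding mdivs_def by auto

lemma mdivs_mem:
  assumes "g \<in> mdivs f"
  shows "lead_coeff g = 1" "g dvd f" "g \<noteq> 0"
  using assms unfolding mdivs_def by auto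

lemma dconv_mdivs:
  assumes f: "lead_coeff (f :: 'a::{finite,field} poly) = 1"
  shows "dconv \<alpha> \<beta> f = (\<Sum>g\<in>mdivs f. \<alpha> g * \<beta> (f div g))"
proof -
  have eq: "{(g,h). monic_poly g \<and> monic_poly h \<and> g * h = f} = (\<lambda>g. (g, f div g)) ` mdivs f"
  proof (intro equalityI subsetI)
    fix x assume "x \<in> {(g,h). monic_poly g \<and> monic_poly h \<and> g * h = f}"
    then obtain g h where x: "x = (g,h)" and g: "lead_coeff g = 1" and h: "lead_coeff h = 1"
      and gh: "g * h = f" unfolding monic_poly_def by auto
    have g0: "g \<noteq> 0" using g by auto
    have "h = f div g" using gh g0 by auto
    moreover have "g \<in> mdivs f" unfolding mdivs_def using g gh by auto
    ultimately show "x \<in> (\<lambda>g. (g, f div g)) ` mdivs f" using x by auto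
  next
    fix x assume "x \<in> (\<lambda>g. (g, f div g)) ` mdivs f"
    then obtain g where x: "x = (g, f div g)" and g: "g \<in> mdivs f" by auto
    have "f div g \<in> mdivs f" "f = g * (f div g)" using mdivs_div[OF f g] by auto
    then show "x \<in> {(g,h). monic_poly g \<and> monic_poly h \<and> g * h = f}"
      using x g unfolding monic_poly_def mdivs_def by auto
  qed
  have inj: "inj_on (\<lambda>g. (g, f div g)) (mdivs f)" by (auto simp: inj_on_def)
  show ?thesis unfolding dconv_def eq sum.reindex[OF inj] by simp
qed

lemma poly_norm_mult:
  assumes "g \<noteq> 0" "h \<noteq> 0"
  shows "poly_norm (g * h :: 'a::{finite,field} poly) = poly_norm g * poly_norm h"
  unfolding poly_norm_def using assms by (simp add: degree_mult_eq power_add)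

lemma poly_norm_pos: "poly_norm (g :: 'a::{finite,field} poly) > 0"
  unfolding poly_norm_def by (simp add: finite_UNIV_card_ge_0)

definition chi :: "'a::{finite,field} poly \<Rightarrow> real" where
  "chi g = (if poly g 0 \<noteq> 0 then 1 else 0)"

lemma alpha_chi: "alpha_GL i g = chi g / poly_norm g ^ i"
  unfolding alpha_GL_def chi_def by (simp add: divide_inverse)

lemma sum_mdivs_swap:
  assumes f: "lead_coeff (f :: 'a::{finite,field} poly) = 1"
  shows "(\<Sum>a\<in>mdivs f. \<Sum>g\<in>mdivs a. F a g) = (\<Sum>g\<in>mdivs f. \<Sum>b\<in>mdivs (f div g). F (g * b) g)"
proof -
  have f0: "f \<noteq> 0" using f by auto
  have finA: "finite (mdivs a)" if "a \<in> mdivs f" for a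
    using that by (intro finite_mdivs) (auto simp: mdivs_def)
  have finB: "finite (mdivs (f div g))" if "g \<in> mdivs f" for g
    using mdivs_div(1)[OF f that] by (intro finite_mdivs) (auto simp: mdivs_def)
  have "(\<Sum>a\<in>mdivs f. \<Sum>g\<in>mdivs a. F a g) = (\<Sum>(a,g)\<in>(SIGMA a:mdivs f. mdivs a). F a g)"
    by (rule sum.Sigma[OF finite_mdivs[OF f0]]) (use finA in auto)
  also have "\<dots> = (\<Sum>(g,b)\<in>(SIGMA g:mdivs f. mdivs (f div g)). F (g * b) g)"
  proof (rule sum.reindex_bij_witness[where i = "\<lambda>(g,b). (g * b, g)" and j = "\<lambda>(a,g). (g, a div g)"])
    fix x assume x: "x \<in> (SIGMA a:mdivs f. mdivs a)"
    obtain a g where xe: "x = (a,g)" by (cases x) auto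
    have a: "a \<in> mdivs f" and g: "g \<in> mdivs a" using x xe by auto
    have g0: "g \<noteq> 0" using mdivs_mem[OF g] by simp
    have ag: "a = g * (a div g)" using mdivs_mem(2)[OF g] by simp
    show "(\<lambda>(g,b). (g * b, g)) ((\<lambda>(a,g). (g, a div g)) x) = x" using xe ag by simp
    have lg: "lead_coeff g = 1" and la: "lead_coeff a = 1" using mdivs_mem[OF g] mdivs_mem[OF a] by auto
    have "lead_coeff (a div g) = 1"
      using mdivs_div(1)[OF la g] unfolding mdivs_def by simp
    moreover obtain c where fc: "f = a * c" using mdivs_mem(2)[OF a] unfolding dvd_def by blast
    have "f div g = (a div g) * c"
      using fc ag g0 by (metis mult.assoc nonzero_mult_div_cancel_left)
    then have "a div g dvd f div g" by simp
    moreover have "g \<in> mdivs f" using g a unfolding mdivs_def by (auto intro: dvd_trans)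
    ultimately show "(\<lambda>(a,g). (g, a div g)) x \<in> (SIGMA g:mdivs f. mdivs (f div g))"
      using xe unfolding mdivs_def by auto
    show "(case (\<lambda>(a,g). (g, a div g)) x of (g, b) \<Rightarrow> F (g * b) g) = (case x of (a, g) \<Rightarrow> F a g)"
      using xe ag by simp
  next
    fix y assume y: "y \<in> (SIGMA g:mdivs f. mdivs (f div g))"
    obtain g b where ye: "y = (g,b)" by (cases y) auto
    have g: "g \<in> mdivs f" and b: "b \<in> mdivs (f div g)" using y ye by auto
    have g0: "g \<noteq> 0" using mdivs_mem[OF g] by simp
    show "(\<lambda>(a,g). (g, a div g)) ((\<lambda>(g,b). (g * b, g)) y) = y" using ye g0 by simp
    have lg: "lead_coeff g = 1" and lb: "lead_coeff b = 1" using mdivs_mem[OF g] mdivs_mem[OF b] by auto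
    have "lead_coeff (g * b) = 1" using lg lb by (simp add: lead_coeff_mult)
    moreover have "g * b dvd f"
    proof -
      have "f = g * (f div g)" using mdivs_mem(2)[OF g] by simp
      moreover have "b dvd f div g" using mdivs_mem(2)[OF b] .
      ultimately show ?thesis by (metis mult_dvd_mono dvd_refl)
    qed
    ultimately show "(\<lambda>(g,b). (g * b, g)) y \<in> (SIGMA a:mdivs f. mdivs a)"
      using ye lg unfolding mdivs_def by auto
  qed
  also have "\<dots> = (\<Sum>g\<in>mdivs f. \<Sum>b\<in>mdivs (f div g). F (g * b) g)"
    by (rule sum.Sigma[OF finite_mdivs[OF f0], symmetric]) (use finB in auto)
  finally show ?thesis .
qed


lemma div_div_mdivs:
  assumes g: "g \<in> mdivs f" and b: "b \<in> mdivs (f div (g :: 'a::field poly))"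
  shows "f div (g * b) = (f div g) div b" "f div g = b * ((f div g) div b)"
proof -
  have g0: "g \<noteq> 0" and b0: "b \<noteq> 0" using mdivs_mem(3)[OF g] mdivs_mem(3)[OF b] by auto
  obtain c where c: "f div g = b * c" using mdivs_mem(2)[OF b] unfolding dvd_def by blast
  have fg: "f = g * (f div g)" using mdivs_mem(2)[OF g] by simp
  then have f: "f = (g * b) * c" using c by (simp add: mult.assoc)
  have "f div (g * b) = c" using f g0 b0 by simp
  moreover have "(f div g) div b = c" using c b0 by simp
  ultimately show "f div (g * b) = (f div g) div b" by simp
  show "f div g = b * ((f div g) div b)" using c b0 by simp
qed

lemma conv_rec:
  assumes "lead_coeff (f :: 'a::{finite,field} poly) = 1"
  shows "conv_alpha_GL (Suc k) f = (\<Sum>g\<in>mdivs f. chi g * conv_alpha_GL k (f div g)) / poly_norm f"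
  using assms
proof (induction k arbitrary: f)
  case 0
  have f: "lead_coeff f = 1" by fact
  have f0: "f \<noteq> 0" using f by auto
  have fin: "finite (mdivs f)" by (rule finite_mdivs[OF f0])
  have "conv_alpha_GL (Suc 0) f = (\<Sum>g\<in>mdivs f. (if g = 1 then 1 else 0) * alpha_GL 1 (f div g))"
    by (simp add: dconv_mdivs[OF f])
  also have "\<dots> = (\<Sum>g\<in>mdivs f. if 1 = g then alpha_GL 1 f else 0)"
    by (intro sum.cong refl) auto
  also have "\<dots> = alpha_GL 1 f" using mdivs_basic(1)[OF f] fin by (simp add: sum.delta)
  finally have L: "conv_alpha_GL (Suc 0) f = chi f / poly_norm f" by (simp add: alpha_chi)
  have "(\<Sum>g\<in>mdivs f. chi g * conv_alpha_GL 0 (f div g)) = (\<Sum>g\<in>mdivs f. if f = g then chi f else 0)"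
  proof (intro sum.cong refl)
    fix g assume g: "g \<in> mdivs f"
    have fe: "f = g * (f div g)" using mdivs_div(3)[OF f g] .
    have g0: "g \<noteq> 0" using mdivs_mem(3)[OF g] .
    have "f div g = 1 \<longleftrightarrow> f = g" using fe g0 by (metis div_self mult.right_neutral)
    then show "chi g * conv_alpha_GL 0 (f div g) = (if f = g then chi f else 0)" by auto
  qed
  also have "\<dots> = chi f" using mdivs_basic(2)[OF f] fin by (simp add: sum.delta)
  finally show ?case using L by simp
next
  case (Suc k)
  have f: "lead_coeff f = 1" by fact
  have f0: "f \<noteq> 0" using f by auto
  have nf: "poly_norm f > 0" by (rule poly_norm_pos)
  let ?c = "conv_alpha_GL"
  have "?c (Suc (Suc k)) f = (\<Sum>a\<in>mdivs f. ?c (Suc k) a * alpha_GL (Suc (Suc k)) (f div a))"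
    by (simp add: dconv_mdivs[OF f])
  also have "\<dots> = (\<Sum>a\<in>mdivs f. \<Sum>g\<in>mdivs a. chi g * ?c k (a div g) * alpha_GL (Suc k) (f div a) / poly_norm f)"
  proof (intro sum.cong refl)
    fix a assume a: "a \<in> mdivs f"
    have la: "lead_coeff a = 1" using mdivs_mem(1)[OF a] .
    have fe: "f = a * (f div a)" using mdivs_div(3)[OF f a] .
    have a0: "a \<noteq> 0" and h0: "f div a \<noteq> 0" using fe f0 by auto
    have nfe: "poly_norm f = poly_norm a * poly_norm (f div a)"
      using poly_norm_mult[OF a0 h0] fe by metis
    have na: "poly_norm a > 0" "poly_norm (f div a) > 0" by (rule poly_norm_pos)+
    have al: "alpha_GL (Suc (Suc k)) (f div a) / poly_norm a = alpha_GL (Suc k) (f div a) / poly_norm f"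
      unfolding alpha_chi nfe using na by (simp add: field_simps)
    have "?c (Suc k) a * alpha_GL (Suc (Suc k)) (f div a) =
        (\<Sum>g\<in>mdivs a. chi g * ?c k (a div g)) * (alpha_GL (Suc (Suc k)) (f div a) / poly_norm a)"
      using Suc.IH[OF la] by simp
    also have "\<dots> = (\<Sum>g\<in>mdivs a. chi g * ?c k (a div g)) * (alpha_GL (Suc k) (f div a) / poly_norm f)"
      unfolding al ..
    also have "\<dots> = (\<Sum>g\<in>mdivs a. chi g * ?c k (a div g) * alpha_GL (Suc k) (f div a) / poly_norm f)"
      by (simp add: sum_distrib_right sum_divide_distrib)
    finally show "?c (Suc k) a * alpha_GL (Suc (Suc k)) (f div a) =
        (\<Sum>g\<in>mdivs a. chi g * ?c k (a div g) * alpha_GL (Suc k) (f div a) / poly_norm f)" .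
  qed
  also have "\<dots> = (\<Sum>g\<in>mdivs f. \<Sum>b\<in>mdivs (f div g).
      chi g * ?c k ((g * b) div g) * alpha_GL (Suc k) (f div (g * b)) / poly_norm f)"
    by (rule sum_mdivs_swap[OF f])
  also have "\<dots> = (\<Sum>g\<in>mdivs f. chi g * ?c (Suc k) (f div g)) / poly_norm f"
    unfolding sum_divide_distrib
  proof (intro sum.cong refl)
    fix g assume g: "g \<in> mdivs f"
    have g0: "g \<noteq> 0" using mdivs_mem(3)[OF g] .
    have lh: "lead_coeff (f div g) = 1" using mdivs_div(1)[OF f g] mdivs_mem(1) by blast
    have "(\<Sum>b\<in>mdivs (f div g). chi g * ?c k ((g * b) div g) * alpha_GL (Suc k) (f div (g * b)) / poly_norm f)
      = (\<Sum>b\<in>mdivs (f div g). chi g * (?c k b * alpha_GL (Suc k) ((f div g) div b)) / poly_norm f)"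
      using g0 div_div_mdivs(1)[OF g] by (intro sum.cong refl) (simp add: mult.assoc)
    also have "\<dots> = chi g * (\<Sum>b\<in>mdivs (f div g). ?c k b * alpha_GL (Suc k) ((f div g) div b)) / poly_norm f"
      by (simp add: sum_distrib_left sum_divide_distrib)
    also have "(\<Sum>b\<in>mdivs (f div g). ?c k b * alpha_GL (Suc k) ((f div g) div b)) = ?c (Suc k) (f div g)"
      by (simp add: dconv_mdivs[OF lh])
    finally show "(\<Sum>b\<in>mdivs (f div g). chi g * ?c k ((g * b) div g) * alpha_GL (Suc k) (f div (g * b)) / poly_norm f)
      = chi g * ?c (Suc k) (f div g) / poly_norm f" .
  qed
  finally show ?case .
qed


lemma affine_lim:
  fixes x s :: "nat \<Rightarrow> real"
  assumes Q: "Q > 1" and rec: "\<And>k. x (Suc k) = (x k + s k) / Q" and s: "s \<longlonglongrightarrow> S"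
  shows "x \<longlonglongrightarrow> S / (Q - 1)"
proof -
  define L where "L = S / (Q - 1)"
  define y where "y k = x k - L" for k
  define e where "e k = s k - S" for k
  have LS: "L + S = L * Q" unfolding L_def using Q by (simp add: field_simps)
  have yrec: "y (Suc k) = (y k + e k) / Q" for k
  proof -
    have "y (Suc k) = (x k + s k) / Q - L" unfolding y_def rec ..
    also have "\<dots> = (x k + s k - L * Q) / Q" using Q by (simp add: field_simps)
    also have "\<dots> = (y k + e k) / Q" unfolding y_def e_def using LS by (simp add: algebra_simps)
    finally show ?thesis .
  qed
  have y0: "y \<longlonglongrightarrow> 0"
  proof (rule LIMSEQ_I)
    fix r :: real assume r: "r > 0"
    define \<epsilon> where "\<epsilon> = r * (Q - 1) / 2"
    have eps: "\<epsilon> > 0" unfolding \<epsilon>_def using r Q by simp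
    have e0: "e \<longlonglongrightarrow> 0" unfolding e_def using s by (simp add: LIMSEQ_iff)
    obtain K where K: "\<And>k. k \<ge> K \<Longrightarrow> norm (e k - 0) < \<epsilon>" using LIMSEQ_D[OF e0 eps] by blast
    have bound: "\<bar>y (K + m)\<bar> \<le> \<bar>y K\<bar> / Q ^ m + \<epsilon> / (Q - 1)" for m
    proof (induction m)
      case 0 then show ?case using eps Q by simp
    next
      case (Suc m)
      have ek: "\<bar>e (K + m)\<bar> < \<epsilon>" using K[of "K + m"] by simp
      have "\<bar>y (K + Suc m)\<bar> = \<bar>y (K + m) + e (K + m)\<bar> / Q" using yrec[of "K + m"] Q by simp
      also have "\<dots> \<le> (\<bar>y (K + m)\<bar> + \<bar>e (K + m)\<bar>) / Q"
        using Q by (intro divide_right_mono abs_triangle_ineq) auto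
      also have "\<dots> \<le> (\<bar>y K\<bar> / Q ^ m + \<epsilon> / (Q - 1) + \<epsilon>) / Q"
        using Suc.IH ek Q by (intro divide_right_mono) auto
      also have "\<dots> = \<bar>y K\<bar> / Q ^ Suc m + \<epsilon> / (Q - 1)"
        using Q by (simp add: field_simps)
      finally show ?case .
    qed
    have "(\<lambda>m. \<bar>y K\<bar> / Q ^ m) \<longlonglongrightarrow> 0" by (rule LIMSEQ_divide_realpow_zero[OF Q])
    then obtain M where M: "\<And>m. m \<ge> M \<Longrightarrow> norm (\<bar>y K\<bar> / Q ^ m - 0) < r / 2"
      using LIMSEQ_D[of _ 0 "r / 2"] r by force
    show "\<exists>no. \<forall>n\<ge>no. norm (y n - 0) < r"
    proof (intro exI allI impI)
      fix n assume n: "n \<ge> K + M"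
      define m where "m = n - K"
      have nm: "n = K + m" and mM: "m \<ge> M" using n unfolding m_def by auto
      have "\<bar>Q ^ m\<bar> = Q ^ m" using Q by simp
      then have "\<bar>y K\<bar> / Q ^ m < r / 2" using M[OF mM] by simp
      moreover have "\<epsilon> / (Q - 1) = r / 2" unfolding \<epsilon>_def using Q by (simp add: field_simps)
      ultimately show "norm (y n - 0) < r" unfolding nm real_norm_def diff_zero using bound[of m] by linarith
    qed
  qed
  have "(\<lambda>k. y k + L) \<longlonglongrightarrow> 0 + L" by (intro tendsto_intros y0)
  then show ?thesis unfolding y_def L_def by simp
qed

lemma conv_zero:
  assumes "lead_coeff (f :: 'a::{finite,field} poly) = 1" and "poly f 0 = 0"
  shows "conv_alpha_GL k f = 0"
  using assms
proof (induction k arbitrary: f)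
  case 0
  then have "f \<noteq> 1" by auto
  then show ?case by simp
next
  case (Suc k)
  have f: "lead_coeff f = 1" and p: "poly f 0 = 0" by fact+
  have "(\<Sum>g\<in>mdivs f. chi g * conv_alpha_GL k (f div g)) = 0"
  proof (intro sum.neutral ballI)
    fix g assume g: "g \<in> mdivs f"
    have fe: "f = g * (f div g)" using mdivs_div(3)[OF f g] .
    have lh: "lead_coeff (f div g) = 1" using mdivs_div(1)[OF f g] mdivs_mem(1) by blast
    have "poly g 0 * poly (f div g) 0 = 0" using p fe by (metis poly_mult)
    then have "poly g 0 = 0 \<or> poly (f div g) 0 = 0" by simp
    then show "chi g * conv_alpha_GL k (f div g) = 0"
      using Suc.IH[OF lh] unfolding chi_def by auto
  qed
  then show ?case using conv_rec[OF f, of k] by simp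
qed

lemma conv_rec_unit:
  assumes f: "lead_coeff (f :: 'a::{finite,field} poly) = 1" and p: "poly f 0 \<noteq> 0"
  shows "conv_alpha_GL (Suc k) f = (\<Sum>h\<in>mdivs f. conv_alpha_GL k h) / poly_norm f"
proof -
  have "(\<Sum>g\<in>mdivs f. chi g * conv_alpha_GL k (f div g)) = (\<Sum>g\<in>mdivs f. conv_alpha_GL k (f div g))"
  proof (intro sum.cong refl)
    fix g assume g: "g \<in> mdivs f"
    have fe: "f = g * (f div g)" using mdivs_div(3)[OF f g] .
    have "poly g 0 * poly (f div g) 0 \<noteq> 0" using p fe by (metis poly_mult)
    then have "chi g = 1" unfolding chi_def by auto
    then show "chi g * conv_alpha_GL k (f div g) = conv_alpha_GL k (f div g)" by simp
  qed
  also have "\<dots> = (\<Sum>h\<in>mdivs f. conv_alpha_GL k h)"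
    by (rule sum.reindex_bij_witness[where i = "\<lambda>k. f div k" and j = "\<lambda>k. f div k"])
      (auto simp: mdivs_div(1,2)[OF f])
  finally show ?thesis using conv_rec[OF f, of k] by simp
qed

lemma Pn_one: "Pn (1 :: 'a::{finite,field} poly) = 1"
  using P_GL_eq_Pn[of "1 :: 'a poly"] unfolding P_GL_def by simp

lemma mdivs_proper:
  assumes f: "lead_coeff (f :: 'a::field poly) = 1" and h: "h \<in> mdivs f" and hf: "h \<noteq> f"
  shows "degree h < degree f"
proof -
  have fe: "f = h * (f div h)" using mdivs_div(3)[OF f h] .
  have lc: "lead_coeff (f div h) = 1" using mdivs_div(1)[OF f h] mdivs_mem(1) by blast
  have h0: "h \<noteq> 0" and c0: "f div h \<noteq> 0" using mdivs_mem(3)[OF h] lc by auto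
  have dg: "degree f = degree h + degree (f div h)" using degree_mult_eq[OF h0 c0] fe by metis
  have "degree (f div h) \<noteq> 0"
  proof
    assume "degree (f div h) = 0"
    then have "f div h = [:lead_coeff (f div h):]" by (metis degree_0_id)
    then have "f div h = 1" using lc by (simp add: one_pCons)
    then show False using fe hf by simp
  qed
  then show ?thesis using dg by simp
qed

lemma mdivs_one: "mdivs (1 :: 'a::field poly) = {1}"
proof (intro equalityI subsetI)
  fix k :: "'a poly" assume "k \<in> mdivs 1"
  then have lk: "lead_coeff k = 1" and kd: "k dvd 1" unfolding mdivs_def by auto
  have "degree k \<le> degree (1 :: 'a poly)" by (rule dvd_imp_degree_le[OF kd]) simp
  then have "degree k = 0" by simp
  then have "k = [:lead_coeff k:]" by (metis degree_0_id)
  then show "k \<in> {1}" using lk by (simp add: one_pCons)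
qed (simp add: mdivs_def)

lemma conv_one: "conv_alpha_GL k (1 :: 'a::{finite,field} poly) = 1"
proof (induction k)
  case 0 then show ?case by simp
next
  case (Suc k)
  have "poly_norm (1 :: 'a poly) = 1" by (simp add: poly_norm_def)
  then show ?case using conv_rec_unit[of "1 :: 'a poly" k] Suc by (simp add: mdivs_one)
qed

lemma conv_lim:
  assumes "lead_coeff (f :: 'a::{finite,field} poly) = 1" and "poly f 0 \<noteq> 0"
  shows "(\<lambda>k. conv_alpha_GL k f) \<longlonglongrightarrow> Pn f"
  using assms
proof (induction "degree f" arbitrary: f rule: less_induct)
  case less
  have f: "lead_coeff f = 1" and p: "poly f 0 \<noteq> 0" by fact+
  show ?case
  proof (cases "degree f = 0")
    case True
    then have f1: "f = 1" using f by (metis degree_0_id one_pCons)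
    show ?thesis unfolding f1 conv_one Pn_one by simp
  next
    case False
    define A where "A = mdivs f - {f}"
    define Q where "Q = poly_norm f"
    have f0: "f \<noteq> 0" using f by auto
    have finA: "finite A" unfolding A_def using finite_mdivs[OF f0] by simp
    have Q1: "Q > 1"
    proof -
      have "real (card (UNIV :: 'a set)) \<ge> 2" using card_UNIV_ge2[where 'a='a] by simp
      then have "real (card (UNIV :: 'a set)) ^ degree f > 1"
        using False by (intro one_less_power) auto
      then show ?thesis unfolding Q_def poly_norm_def .
    qed
    have IH: "(\<lambda>k. conv_alpha_GL k h) \<longlonglongrightarrow> Pn h" if h: "h \<in> A" for h
    proof -
      have hm: "h \<in> mdivs f" and hf: "h \<noteq> f" using h unfolding A_def by auto
      have lh: "lead_coeff h = 1" using mdivs_mem(1)[OF hm] .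
      have "poly f 0 = poly h 0 * poly (f div h) 0" using mdivs_div(3)[OF f hm] by (metis poly_mult)
      then have ph: "poly h 0 \<noteq> 0" using p by auto
      show ?thesis by (rule less.hyps[OF mdivs_proper[OF f hm hf] lh ph])
    qed
    have sum_split: "(\<Sum>h\<in>mdivs f. F h) = F f + (\<Sum>h\<in>A. F h)" for F :: "'a poly \<Rightarrow> real"
      unfolding A_def using finite_mdivs[OF f0] mdivs_basic(2)[OF f] by (simp add: sum.remove)
    have rec: "conv_alpha_GL (Suc k) f = (conv_alpha_GL k f + (\<Sum>h\<in>A. conv_alpha_GL k h)) / Q" for k
      using conv_rec_unit[OF f p, of k] sum_split unfolding Q_def by simp
    have slim: "(\<lambda>k. \<Sum>h\<in>A. conv_alpha_GL k h) \<longlonglongrightarrow> (\<Sum>h\<in>A. Pn h)"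
      by (rule tendsto_sum) (use IH in auto)
    have lim: "(\<lambda>k. conv_alpha_GL k f) \<longlonglongrightarrow> (\<Sum>h\<in>A. Pn h) / (Q - 1)"
      by (rule affine_lim[OF Q1 rec slim])
    have "Q * Pn f = Pn f + (\<Sum>h\<in>A. Pn h)"
      using Pn_recursion[OF f] sum_split unfolding Q_def poly_norm_def by simp
    then have "Pn f = (\<Sum>h\<in>A. Pn h) / (Q - 1)" using Q1 by (simp add: field_simps)
    then show ?thesis using lim by simp
  qed
qed

theorem theorem3p4:
  fixes f :: "'a::{finite,field} poly"
  assumes "monic_poly f"
  shows "(\<lambda>k. conv_alpha_GL k f) \<longlonglongrightarrow> P_GL f"
proof -
  have f: "lead_coeff f = 1" using assms unfolding monic_poly_def .
  show ?thesis
  proof (cases "poly f 0 = 0")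
    case True
    then show ?thesis using conv_zero[OF f True] P_GL_zero[OF f True] by simp
  next
    case False
    then show ?thesis using conv_lim[OF f False] P_GL_eq_Pn[OF f False] by simp
  qed
qed


end
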